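(* For each sign $\pm$, the family $\{q^{\pm}_{\boldsymbol\lambda}(x;\mathbf t)\mid \boldsymbol\lambda\in\mathcal P_{n,r}\}$ is a $\mathbb Q(\mathbf t)$-basis of $\Xi^n_{\mathbb Q}(\mathbf t)$.
   Context: Fix an integer $r\ge 2$. Let $x=(x^{(1)},\dots,x^{(r)})$, where each $x^{(k)}=(x^{(k)}_1,x^{(k)}_2,\dots)$ is an infinite family of commuting indeterminates; upper indices $k$ are read modulo $r$ with representatives in $\{1,\dots,r\}$. Let $\Xi=\Lambda(x^{(1)})\otimes_{\mathbb Z}\cdots\otimes_{\mathbb Z}\Lambda(x^{(r)})$ be the ring of symmetric functions (integer coefficients, bounded degree) symmetric in each family $x^{(k)}$ separately, and $\Xi^n$ its homogeneous part of total degree $n$. Let $\mathbf t=(t_1,\dots,t_r)$ be indeterminates, lower indices of $t$ read modulo $r$ in $\{1,\dots,r\}$ (so $t_0$ means $t_r$); $\Xi^n[\mathbf t]=\mathbb Z[\mathbf t]\otimes\Xi^n$, $\Xi^n_{\mathbb Q}(\mathbf t)=\mathbb Q(\mathbf t)\otimes\Xi^n$. $\mathcal P_{n,r}$ is the set of $r$-tuples $\boldsymbol\lambda=(\lambda^{(1)},\dots,\lambda^{(r)})$ of partitions with $\sum_k|\lambda^{(k)}|=n$. For an indeterminate $t$, $k\in\mathbb Z/r\mathbb Z$ and $s\ge 0$, define $q^{(k)}_{s,\pm}(x;t)$ by the generating function $\sum_{s\ge0}q^{(k)}_{s,\pm}(x;t)u^s=\prod_{i\ge1}\frac{1-tux^{(k\mp1)}_i}{1-ux^{(k)}_i}$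 (so $q^{(k)}_{0,\pm}=1$). For $\boldsymbol\lambda\in\mathcal P_{n,r}$ put $q^{+}_{\boldsymbol\lambda}(x;\mathbf t)=\prod_{k=1}^r\prod_{i\ge1}q^{(k)}_{\lambda^{(k)}_i,+}(x;t_{k-1})$ and $q^{-}_{\boldsymbol\lambda}(x;\mathbf t)=\prod_{k=1}^r\prod_{i\ge1}q^{(k)}_{\lambda^{(k)}_i,-}(x;t_{k})$. *)

theory Defs
  imports Complex_Main "HOL-Library.Poly_Mapping" "HOL-Computational_Algebra.Fraction_Field"
begin

text \<open>Variables: the variable x^(k)_i is indexed by the pair (k,i) (family k in 1..r,
  position i :: nat).  A monomial is an exponent function of finite support.\<close>

type_synonym mono = "nat \<times> nat \<Rightarrow> nat"

text \<open>Rational functions: fraction field of Q[t_1, t_2, ...] (poly_mapping polynomials).\<close>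
type_synonym ratfun = "((nat \<Rightarrow>\<^sub>0 nat) \<Rightarrow>\<^sub>0 rat) fract"

text \<open>Q(t_1,...,t_r) as a subfield of ratfun.\<close>
definition pvars :: "((nat \<Rightarrow>\<^sub>0 nat) \<Rightarrow>\<^sub>0 rat) \<Rightarrow> nat set" where
  "pvars p = \<Union>(Poly_Mapping.keys ` Poly_Mapping.keys p)"

definition Qt :: "nat \<Rightarrow> ratfun set" where
  "Qt r = {x. \<exists>p q. x = Fract p q \<and> q \<noteq> 0 \<and> pvars p \<subseteq> {1..r} \<and> pvars q \<subseteq> {1..r}}"

definition tvar :: "nat \<Rightarrow> ratfun" where
  "tvar k = Fract (Poly_Mapping.single (Poly_Mapping.single k 1) 1) 1"

text \<open>Index reduction modulo r with representatives in 1..r.\<close>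
definition fam :: "nat \<Rightarrow> int \<Rightarrow> nat" where
  "fam r k = nat ((k - 1) mod int r) + 1"

definition tt :: "nat \<Rightarrow> int \<Rightarrow> ratfun" where
  "tt r k = tvar (fam r k)"

definition mono_ok :: "nat \<Rightarrow> mono \<Rightarrow> bool" where
  "mono_ok r \<alpha> \<longleftrightarrow> finite {v. \<alpha> v \<noteq> 0} \<and> (\<forall>k i. \<alpha> (k,i) \<noteq> 0 \<longrightarrow> k \<in> {1..r})"

definition mdeg :: "mono \<Rightarrow> nat" where
  "mdeg \<alpha> = (\<Sum>v\<in>{v. \<alpha> v \<noteq> 0}. \<alpha> v)"

text \<open>Product of series (each finitely supported monomial has finitely many divisors).\<close>
definition ser_mult :: "(mono \<Rightarrow> 'a::comm_ring_1) \<Rightarrow> (mono \<Rightarrow> 'a) \<Rightarrow> mono \<Rightarrow> 'a" where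
  "ser_mult f g \<alpha> = (\<Sum>\<beta>\<in>{\<beta>. \<forall>v. \<beta> v \<le> \<alpha> v}. f \<beta> * g (\<lambda>v. \<alpha> v - \<beta> v))"

definition ser_one :: "mono \<Rightarrow> 'a::comm_ring_1" where
  "ser_one \<alpha> = (if (\<forall>v. \<alpha> v = 0) then 1 else 0)"

definition ser_prod :: "(mono \<Rightarrow> 'a::comm_ring_1) list \<Rightarrow> mono \<Rightarrow> 'a" where
  "ser_prod fs = foldr ser_mult fs ser_one"

definition in_fam :: "nat \<Rightarrow> mono \<Rightarrow> bool" where
  "in_fam k \<alpha> \<longleftrightarrow> finite {v. \<alpha> v \<noteq> 0} \<and> (\<forall>k' i. \<alpha> (k',i) \<noteq> 0 \<longrightarrow> k' = k)"

definition h_ser :: "nat \<Rightarrow> nat \<Rightarrow> mono \<Rightarrow> 'a::comm_ring_1" where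
  "h_ser k m \<alpha> = (if in_fam k \<alpha> \<and> mdeg \<alpha> = m then 1 else 0)"

definition e_ser :: "nat \<Rightarrow> nat \<Rightarrow> mono \<Rightarrow> 'a::comm_ring_1" where
  "e_ser k j \<alpha> = (if in_fam k \<alpha> \<and> (\<forall>v. \<alpha> v \<le> 1) \<and> mdeg \<alpha> = j then 1 else 0)"

text \<open>Coefficient of u^s in prod_i (1 - t u y_i)/(1 - u x_i), where x = x^(k), y = x^(k'):
  equals sum_{j=0..s} (-t)^j e_j(y) h_(s-j)(x).\<close>
definition q_ser :: "nat \<Rightarrow> nat \<Rightarrow> 'a::comm_ring_1 \<Rightarrow> nat \<Rightarrow> mono \<Rightarrow> 'a" where
  "q_ser k k' t s \<alpha> = (\<Sum>j\<in>{0..s}. (- t) ^ j * ser_mult (e_ser k' j) (h_ser k (s - j)) \<alpha>)"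

text \<open>r-tuples of partitions of total size n; components outside 1..r are empty;
  a partition is a weakly decreasing list of positive parts.\<close>
definition multipart :: "nat \<Rightarrow> nat \<Rightarrow> (nat \<Rightarrow> nat list) set" where
  "multipart r n = {lam. (\<forall>k. k \<notin> {1..r} \<longrightarrow> lam k = [])
      \<and> (\<forall>k. sorted_wrt (\<ge>) (lam k) \<and> 0 \<notin> set (lam k))
      \<and> (\<Sum>k=1..r. sum_list (lam k)) = n}"

text \<open>q^+_lambda: factors q^(k)_{lambda^(k)_i,+}(x; t_(k-1)), with y = x^(k-1).\<close>
definition qplus :: "nat \<Rightarrow> (nat \<Rightarrow> nat list) \<Rightarrow> mono \<Rightarrow> ratfun" where
  "qplus r lam = ser_prod (concat (map (\<lambda>k. map (\<lambda>s. q_ser k (fam r (int k - 1)) (tt r (int k - 1)) s)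
                                             (lam k)) [1..<r+1]))"

text \<open>q^-_lambda: factors q^(k)_{lambda^(k)_i,-}(x; t_k), with y = x^(k+1).\<close>
definition qminus :: "nat \<Rightarrow> (nat \<Rightarrow> nat list) \<Rightarrow> mono \<Rightarrow> ratfun" where
  "qminus r lam = ser_prod (concat (map (\<lambda>k. map (\<lambda>s. q_ser k (fam r (int k + 1)) (tt r (int k)) s)
                                             (lam k)) [1..<r+1]))"

text \<open>Xi^n_Q(t): series with coefficients in Q(t_1..t_r), supported on monomials of degree n
  in the variables of the r families, symmetric in each family separately.\<close>
definition XiQt :: "nat \<Rightarrow> nat \<Rightarrow> (mono \<Rightarrow> ratfun) set" where
  "XiQt r n = {f. (\<forall>\<alpha>. f \<alpha> \<in> Qt r)
      \<and> (\<forall>\<alpha>. f \<alpha> \<noteq> 0 \<longrightarrow> mono_ok r \<alpha> \<and> mdeg \<alpha> = n)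
      \<and> (\<forall>\<pi>. (\<forall>k. bij (\<pi> k)) \<longrightarrow> (\<forall>\<alpha>. f (\<lambda>(k,i). \<alpha> (k, \<pi> k i)) = f \<alpha>))}"

definition is_Qt_basis :: "nat \<Rightarrow> nat \<Rightarrow> ((nat \<Rightarrow> nat list) \<Rightarrow> mono \<Rightarrow> ratfun) \<Rightarrow> bool" where
  "is_Qt_basis r n b \<longleftrightarrow>
     (\<forall>lam\<in>multipart r n. b lam \<in> XiQt r n)
   \<and> (\<forall>c. (\<forall>lam\<in>multipart r n. c lam \<in> Qt r) \<longrightarrow>
          (\<forall>\<alpha>. (\<Sum>lam\<in>multipart r n. c lam * b lam \<alpha>) = 0) \<longrightarrow>
          (\<forall>lam\<in>multipart r n. c lam = 0))
   \<and> (\<forall>f\<in>XiQt r n. \<exists>c. (\<forall>lam\<in>multipart r n. c lam \<in> Qt r) \<and>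
          (\<forall>\<alpha>. f \<alpha> = (\<Sum>lam\<in>multipart r n. c lam * b lam \<alpha>)))"

end

theory Submission
  imports Defs "Jordan_Normal_Form.Determinant"
begin

lemma finite_le_set:
  assumes "finite {v. (\<alpha>::mono) v \<noteq> 0}" shows "finite {\<beta>::mono. \<forall>v. \<beta> v \<le> \<alpha> v}"
proof -
  let ?S = "{v. \<alpha> v \<noteq> 0}"
  let ?M = "sum \<alpha> ?S"
  have "{\<beta>::mono. \<forall>v. \<beta> v \<le> \<alpha> v} \<subseteq> {f. \<forall>x. (x \<in> ?S \<longrightarrow> f x \<in> {0..?M}) \<and> (x \<notin> ?S \<longrightarrow> f x = 0)}"
  proof (rule subsetI)
    fix \<beta> :: mono assume "\<beta> \<in> {\<beta>::mono. \<forall>v. \<beta> v \<le> \<alpha> v}"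
    then have h: "\<forall>v. \<beta> v \<le> \<alpha> v" by simp
    have "\<alpha> x \<le> ?M" if "x \<in> ?S" for x using assms that by (intro member_le_sum) auto
    then show "\<beta> \<in> {f. \<forall>x. (x \<in> ?S \<longrightarrow> f x \<in> {0..?M}) \<and> (x \<notin> ?S \<longrightarrow> f x = 0)}"
      using h by (auto simp del: split_paired_All, metis le_trans, metis le_zero_eq)
  qed
  moreover have "finite {f::mono. \<forall>x. (x \<in> ?S \<longrightarrow> f x \<in> {0..?M}) \<and> (x \<notin> ?S \<longrightarrow> f x = 0)}"
    by (rule finite_set_of_finite_funs) (use assms in auto)
  ultimately show ?thesis by (rule finite_subset)
qed

lemma ser_mult_nz:
  assumes "ser_mult F G \<alpha> \<noteq> 0"
  shows "\<exists>\<beta>. (\<forall>v. \<beta> v \<le> \<alpha> v) \<and> F \<beta> \<noteq> 0 \<and> G (\<lambda>v. \<alpha> v - \<beta> v) \<noteq> 0"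
  using assms unfolding ser_mult_def
  by (metis (mono_tags, lifting) mem_Collect_eq mult_not_zero sum.not_neutral_contains_not_neutral)

lemma ser_prod_Nil: "ser_prod [] = ser_one" by (simp add: ser_prod_def)
lemma ser_prod_Cons: "ser_prod (F # Fs) = ser_mult F (ser_prod Fs)" by (simp add: ser_prod_def)

lemma (in comm_ring_hom) hom_ser_mult: "hom (ser_mult F G \<alpha>) = ser_mult (hom \<circ> F) (hom \<circ> G) \<alpha>"
  unfolding ser_mult_def by (simp add: hom_distribs)

lemma (in comm_ring_hom) hom_ser_one: "hom (ser_one \<alpha>) = ser_one \<alpha>"
  by (simp add: ser_one_def)

lemma (in comm_ring_hom) hom_ser_prod: "hom (ser_prod Fs \<alpha>) = ser_prod (map (\<lambda>F \<beta>. hom (F \<beta>)) Fs) \<alpha>"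
proof (induction Fs arbitrary: \<alpha>)
  case Nil then show ?case by (simp add: ser_prod_Nil hom_ser_one)
next
  case (Cons F Fs)
  have e: "(\<lambda>\<beta>. hom (ser_prod Fs \<beta>)) = ser_prod (map (\<lambda>F \<beta>. hom (F \<beta>)) Fs)" using Cons by (simp add: fun_eq_iff)
  show ?case by (simp add: ser_prod_Cons hom_ser_mult comp_def e)
qed

lemma (in comm_ring_hom) hom_e_ser: "hom \<circ> e_ser k j = e_ser k j"
  by (simp add: e_ser_def fun_eq_iff)
lemma (in comm_ring_hom) hom_h_ser: "hom \<circ> h_ser k j = h_ser k j"
  by (simp add: h_ser_def fun_eq_iff)

lemma (in comm_ring_hom) hom_q_ser: "hom (q_ser k k' t s \<alpha>) = q_ser k k' (hom t) s \<alpha>"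
  unfolding q_ser_def by (simp add: hom_distribs hom_ser_mult hom_e_ser hom_h_ser)

definition rws :: "nat \<Rightarrow> (nat \<Rightarrow> nat list) \<Rightarrow> (nat \<times> nat) list" where
  "rws r lam = concat (map (\<lambda>k. map (Pair k) (lam k)) [1..<r+1])"

definition qg :: "nat \<Rightarrow> (nat \<Rightarrow> nat) \<Rightarrow> (nat \<Rightarrow> 'a) \<Rightarrow> (nat \<Rightarrow> nat list) \<Rightarrow> mono \<Rightarrow> 'a::comm_ring_1" where
  "qg r \<phi> T lam = ser_prod (map (\<lambda>(k,s). q_ser k (\<phi> k) (T k) s) (rws r lam))"

lemma qplus_qg: "qplus r = qg r (\<lambda>k. fam r (int k - 1)) (\<lambda>k. tt r (int k - 1))"
  unfolding qplus_def qg_def rws_def by (simp add: map_concat comp_def fun_eq_iff)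

lemma qminus_qg: "qminus r = qg r (\<lambda>k. fam r (int k + 1)) (\<lambda>k. tt r (int k))"
  unfolding qminus_def qg_def rws_def by (simp add: map_concat comp_def fun_eq_iff)

lemma (in comm_ring_hom) hom_qg: "hom (qg r \<phi> T lam \<alpha>) = qg r \<phi> (hom \<circ> T) lam \<alpha>"
  unfolding qg_def hom_ser_prod by (simp add: comp_def case_prod_unfold hom_q_ser)

abbreviation lkp where "lkp \<equiv> Poly_Mapping.lookup"
abbreviation kys where "kys \<equiv> Poly_Mapping.keys"

type_synonym R = "(nat \<Rightarrow>\<^sub>0 nat) \<Rightarrow>\<^sub>0 rat"

definition mdg :: "(nat \<Rightarrow>\<^sub>0 nat) \<Rightarrow> nat" where "mdg m = sum (lkp m) (kys m)"

lemma mdg_superset: "finite S \<Longrightarrow> kys m \<subseteq> S \<Longrightarrow> mdg m = sum (lkp m) S"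
  unfolding mdg_def by (rule sum.mono_neutral_left) (auto simp: in_keys_iff)

lemma mdg_add: "mdg (a + b) = mdg a + mdg b"
proof -
  let ?S = "kys a \<union> kys b"
  have "mdg (a+b) = sum (lkp (a+b)) ?S" by (rule mdg_superset) (use keys_add[of a b] in auto)
  also have "\<dots> = sum (lkp a) ?S + sum (lkp b) ?S" by (simp add: lookup_add sum.distrib)
  also have "\<dots> = mdg a + mdg b" using mdg_superset[of ?S a] mdg_superset[of ?S b] by simp
  finally show ?thesis .
qed

definition psi :: "R \<Rightarrow> rat poly" where
  "psi p = (\<Sum>m\<in>kys p. monom (lkp p m) (mdg m))"

lemma psi_superset: "finite S \<Longrightarrow> kys p \<subseteq> S \<Longrightarrow> psi p = (\<Sum>m\<in>S. monom (lkp p m) (mdg m))"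
  unfolding psi_def by (rule sum.mono_neutral_left) (auto simp: in_keys_iff)

lemma psi_add: "psi (p + q) = psi p + psi q"
proof -
  let ?S = "kys p \<union> kys q"
  have "psi (p+q) = (\<Sum>m\<in>?S. monom (lkp (p+q) m) (mdg m))" by (rule psi_superset) (use keys_add[of p q] in auto)
  also have "\<dots> = (\<Sum>m\<in>?S. monom (lkp p m) (mdg m)) + (\<Sum>m\<in>?S. monom (lkp q m) (mdg m))"
    by (simp add: lookup_add add_monom[symmetric] sum.distrib)
  also have "\<dots> = psi p + psi q"
  proof -
    have "psi p = (\<Sum>m\<in>?S. monom (lkp p m) (mdg m))" by (rule psi_superset) auto
    moreover have "psi q = (\<Sum>m\<in>?S. monom (lkp q m) (mdg m))" by (rule psi_superset) auto
    ultimately show ?thesis by simp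
  qed
  finally show ?thesis .
qed

lemma lookup_mult_fin:
  "lkp (p * q) m = (\<Sum>a\<in>kys p. \<Sum>b\<in>kys q. if m = a + b then lkp p a * lkp q b else 0)"
proof -
  have "lkp (p * q) m = (\<Sum>l. lkp p l * (\<Sum>q'. lkp q q' when m = l + q'))" by (rule lookup_mult)
  also have "\<dots> = (\<Sum>l\<in>kys p. lkp p l * (\<Sum>q'. lkp q q' when m = l + q'))"
    by (rule Sum_any.expand_superset) (auto simp: in_keys_iff)
  also have "\<dots> = (\<Sum>l\<in>kys p. lkp p l * (\<Sum>q'\<in>kys q. lkp q q' when m = l + q'))"
    by (intro sum.cong refl arg_cong2[where f="(*)"] Sum_any.expand_superset) (auto simp: in_keys_iff)
  also have "\<dots> = (\<Sum>a\<in>kys p. \<Sum>b\<in>kys q. if m = a + b then lkp p a * lkp q b else 0)"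
    by (simp add: sum_distrib_left when_def) (intro sum.cong refl, simp)
  finally show ?thesis .
qed

lemma psi_mult: "psi (p * q) = psi p * psi q"
proof -
  let ?S = "(\<lambda>(a,b). a + b) ` (kys p \<times> kys q)"
  have fS: "finite ?S" by simp
  have kS: "kys (p*q) \<subseteq> ?S" using keys_mult[of p q] by auto
  have "psi (p*q) = (\<Sum>m\<in>?S. monom (lkp (p*q) m) (mdg m))" by (rule psi_superset[OF fS kS])
  also have "\<dots> = (\<Sum>m\<in>?S. \<Sum>a\<in>kys p. \<Sum>b\<in>kys q. monom (if m = a + b then lkp p a * lkp q b else 0) (mdg m))"
    by (simp add: lookup_mult_fin monom_sum)
  also have "\<dots> = (\<Sum>a\<in>kys p. \<Sum>b\<in>kys q. \<Sum>m\<in>?S. monom (if m = a + b then lkp p a * lkp q b else 0) (mdg m))"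
    by (subst sum.swap, subst (2) sum.swap, rule refl)
  also have "\<dots> = (\<Sum>a\<in>kys p. \<Sum>b\<in>kys q. monom (lkp p a * lkp q b) (mdg (a + b)))"
  proof (intro sum.cong refl)
    fix a b assume ab: "a \<in> kys p" "b \<in> kys q"
    have "a + b \<in> ?S" using ab by auto
    then show "(\<Sum>m\<in>?S. monom (if m = a + b then lkp p a * lkp q b else 0) (mdg m)) = monom (lkp p a * lkp q b) (mdg (a + b))"
    proof -
      have e: "\<And>m. monom (if m = a + b then lkp p a * lkp q b else 0) (mdg m) = (if m = a + b then monom (lkp p a * lkp q b) (mdg (a + b)) else 0)"
        by auto
      show ?thesis unfolding e using \<open>a + b \<in> ?S\<close> fS by (simp add: sum.delta)
    qed
  qed
  also have "\<dots> = (\<Sum>a\<in>kys p. \<Sum>b\<in>kys q. monom (lkp p a) (mdg a) * monom (lkp q b) (mdg b))"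
    by (simp add: mdg_add mult_monom)
  also have "\<dots> = psi p * psi q" by (simp add: psi_def sum_product)
  finally show ?thesis .
qed

lemma psi_zero: "psi 0 = 0" by (simp add: psi_def)

lemma psi_one: "psi 1 = 1"
  by (simp add: psi_def mdg_def one_poly_def)

interpretation psi: comm_ring_hom psi
  by unfold_locales (auto simp: psi_add psi_mult psi_one psi_zero)

definition Xv :: "nat \<Rightarrow> R" where "Xv k = Poly_Mapping.single (Poly_Mapping.single k 1) 1"

lemma psi_Xv: "psi (Xv k) = [:0, 1:]"
  by (simp add: psi_def Xv_def mdg_def monom_Suc)

interpretation cpoly: comm_ring_hom "\<lambda>c::rat. [:c:]"
  by unfold_locales auto

interpretation emb: inj_comm_ring_hom "to_fract :: R \<Rightarrow> ratfun"
  by unfold_locales auto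

lemma tvar_Xv: "tvar k = to_fract (Xv k)"
  by (simp add: tvar_def Xv_def to_fract_def)

lemma pvars_zero[simp]: "pvars 0 = {}" by (simp add: pvars_def)
lemma pvars_one[simp]: "pvars 1 = {}" by (simp add: pvars_def)
lemma pvars_add: "pvars (p + q) \<subseteq> pvars p \<union> pvars q"
  unfolding pvars_def using keys_add[of p q] by auto
lemma pvars_uminus[simp]: "pvars (- p) = pvars p"
  unfolding pvars_def by simp
lemma pvars_mult: "pvars (p * q) \<subseteq> pvars p \<union> pvars q"
proof
  fix x assume "x \<in> pvars (p * q)"
  then obtain m where m: "m \<in> kys (p*q)" "x \<in> kys m" unfolding pvars_def by auto
  then obtain a b where ab: "a \<in> kys p" "b \<in> kys q" "m = a + b" using keys_mult[of p q] by auto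
  then have "x \<in> kys a \<union> kys b" using m keys_add[of a b] by auto
  then show "x \<in> pvars p \<union> pvars q" using ab unfolding pvars_def by auto
qed
lemma pvars_Xv: "pvars (Xv k) = {k}" by (simp add: pvars_def Xv_def)

lemma QtI: "q \<noteq> 0 \<Longrightarrow> pvars p \<subseteq> {1..r} \<Longrightarrow> pvars q \<subseteq> {1..r} \<Longrightarrow> Fract p q \<in> Qt r"
  unfolding Qt_def by blast
lemma QtE: "x \<in> Qt r \<Longrightarrow> (\<And>p q. x = Fract p q \<Longrightarrow> q \<noteq> 0 \<Longrightarrow> pvars p \<subseteq> {1..r} \<Longrightarrow> pvars q \<subseteq> {1..r} \<Longrightarrow> P) \<Longrightarrow> P"
  unfolding Qt_def by blast

lemma Qt_zero[simp]: "0 \<in> Qt r"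
  by (metis QtI Zero_fract_def empty_subsetI pvars_one pvars_zero zero_neq_one)
lemma Qt_one[simp]: "1 \<in> Qt r"
  by (metis QtI One_fract_def empty_subsetI pvars_one zero_neq_one)

lemma Qt_add: assumes "x \<in> Qt r" "y \<in> Qt r" shows "x + y \<in> Qt r"
proof -
  obtain a b where x: "x = Fract a b" "b \<noteq> 0" "pvars a \<subseteq> {1..r}" "pvars b \<subseteq> {1..r}" using assms(1) by (rule QtE)
  obtain c d where y: "y = Fract c d" "d \<noteq> 0" "pvars c \<subseteq> {1..r}" "pvars d \<subseteq> {1..r}" using assms(2) by (rule QtE)
  have "x + y = Fract (a * d + c * b) (b * d)" using x y by simp
  moreover have "pvars (a * d + c * b) \<subseteq> {1..r}"
    using pvars_add[of "a*d" "c*b"] pvars_mult[of a d] pvars_mult[of c b] x y by blast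
  moreover have "pvars (b * d) \<subseteq> {1..r}" using pvars_mult[of b d] x y by auto
  ultimately show ?thesis using x y by (auto intro!: QtI)
qed

lemma Qt_mult: assumes "x \<in> Qt r" "y \<in> Qt r" shows "x * y \<in> Qt r"
proof -
  obtain a b where x: "x = Fract a b" "b \<noteq> 0" "pvars a \<subseteq> {1..r}" "pvars b \<subseteq> {1..r}" using assms(1) by (rule QtE)
  obtain c d where y: "y = Fract c d" "d \<noteq> 0" "pvars c \<subseteq> {1..r}" "pvars d \<subseteq> {1..r}" using assms(2) by (rule QtE)
  have "x * y = Fract (a * c) (b * d)" using x y by simp
  moreover have "pvars (a * c) \<subseteq> {1..r}" using pvars_mult[of a c] x y by auto
  moreover have "pvars (b * d) \<subseteq> {1..r}" using pvars_mult[of b d] x y by auto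
  ultimately show ?thesis using x y by (auto intro!: QtI)
qed

lemma Qt_uminus: assumes "x \<in> Qt r" shows "- x \<in> Qt r"
proof -
  obtain a b where x: "x = Fract a b" "b \<noteq> 0" "pvars a \<subseteq> {1..r}" "pvars b \<subseteq> {1..r}" using assms(1) by (rule QtE)
  then show ?thesis by (auto intro!: QtI)
qed

lemma Qt_diff: "x \<in> Qt r \<Longrightarrow> y \<in> Qt r \<Longrightarrow> x - y \<in> Qt r"
  using Qt_add[of x r "-y"] Qt_uminus[of y r] by simp

lemma Qt_inverse: assumes "x \<in> Qt r" shows "inverse x \<in> Qt r"
proof -
  obtain a b where x: "x = Fract a b" "b \<noteq> 0" "pvars a \<subseteq> {1..r}" "pvars b \<subseteq> {1..r}" using assms(1) by (rule QtE)
  show ?thesis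
  proof (cases "a = 0")
    case True
    have "x = 0" using x True by (simp add: Zero_fract_def eq_fract)
    then show ?thesis by simp
  next
    case False then show ?thesis using x by (auto intro!: QtI)
  qed
qed

lemma Qt_divide: "x \<in> Qt r \<Longrightarrow> y \<in> Qt r \<Longrightarrow> x / y \<in> Qt r"
  by (simp add: divide_inverse Qt_mult Qt_inverse)

lemma Qt_sum: "(\<And>i. i \<in> A \<Longrightarrow> f i \<in> Qt r) \<Longrightarrow> sum f A \<in> Qt r"
  by (induction A rule: infinite_finite_induct) (auto intro: Qt_add)

lemma Qt_prod: "(\<And>i. i \<in> A \<Longrightarrow> f i \<in> Qt r) \<Longrightarrow> prod f A \<in> Qt r"
  by (induction A rule: infinite_finite_induct) (auto intro: Qt_mult)

lemma Qt_power: "x \<in> Qt r \<Longrightarrow> x ^ n \<in> Qt r"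
  by (induction n) (auto intro: Qt_mult)

lemma Qt_of_int: "of_int i \<in> Qt r"
proof -
  have "of_int i = (\<Sum>j<nat \<bar>i\<bar>. (1::ratfun)) \<or> of_int i = - (\<Sum>j<nat \<bar>i\<bar>. (1::ratfun))"
    by (cases "i \<ge> 0") auto
  then show ?thesis using Qt_sum[of "{..<nat \<bar>i\<bar>}" "\<lambda>_. 1" r] Qt_uminus by auto
qed

lemma tvar_Qt: "k \<in> {1..r} \<Longrightarrow> tvar k \<in> Qt r"
  unfolding tvar_def by (rule QtI) (auto simp: pvars_def)

lemma fam_range: "r > 0 \<Longrightarrow> fam r k \<in> {1..r}"
proof -
  assume "r > 0"
  then have "0 \<le> (k - 1) mod int r" "(k - 1) mod int r < int r" by auto
  then show ?thesis unfolding fam_def by auto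
qed

lemma tt_Qt: "r > 0 \<Longrightarrow> tt r k \<in> Qt r"
  unfolding tt_def by (intro tvar_Qt fam_range)

lemma ser_mult_Qt: "(\<And>\<beta>. F \<beta> \<in> Qt r) \<Longrightarrow> (\<And>\<beta>. G \<beta> \<in> Qt r) \<Longrightarrow> ser_mult F G \<alpha> \<in> Qt r"
  unfolding ser_mult_def by (intro Qt_sum Qt_mult) auto

lemma ser_one_Qt: "ser_one \<alpha> \<in> Qt r" by (simp add: ser_one_def)

lemma ser_prod_Qt: "(\<And>F \<beta>. F \<in> set Fs \<Longrightarrow> F \<beta> \<in> Qt r) \<Longrightarrow> ser_prod Fs \<alpha> \<in> Qt r"
proof (induction Fs arbitrary: \<alpha>)
  case Nil then show ?case by (simp add: ser_prod_Nil ser_one_Qt)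
next
  case (Cons F Fs) then show ?case by (simp add: ser_prod_Cons ser_mult_Qt)
qed

lemma q_ser_Qt: "t \<in> Qt r \<Longrightarrow> q_ser k k' t s \<alpha> \<in> Qt r"
  unfolding q_ser_def
  by (intro Qt_sum Qt_mult Qt_power Qt_uminus ser_mult_Qt) (auto simp: e_ser_def h_ser_def)

lemma qg_Qt: "(\<And>k. T k \<in> Qt r) \<Longrightarrow> qg r' \<phi> T lam \<alpha> \<in> Qt r"
  unfolding qg_def by (intro ser_prod_Qt) (auto intro!: q_ser_Qt)

definition dsupp :: "nat \<Rightarrow> nat \<Rightarrow> (mono \<Rightarrow> 'a::zero) \<Rightarrow> bool" where
  "dsupp r d F \<longleftrightarrow> (\<forall>\<alpha>. F \<alpha> \<noteq> 0 \<longrightarrow> mono_ok r \<alpha> \<and> mdeg \<alpha> = d)"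

lemma mdeg_superset: "finite S \<Longrightarrow> {v. \<alpha> v \<noteq> 0} \<subseteq> S \<Longrightarrow> mdeg \<alpha> = sum \<alpha> S"
  unfolding mdeg_def by (rule sum.mono_neutral_left) auto

lemma mono_ok_add:
  assumes "mono_ok r \<beta>" "mono_ok r \<gamma>"
  shows "mono_ok r (\<lambda>v. \<beta> v + \<gamma> v) \<and> mdeg (\<lambda>v. \<beta> v + \<gamma> v) = mdeg \<beta> + mdeg \<gamma>"
proof -
  let ?S = "{v. \<beta> v \<noteq> 0} \<union> {v. \<gamma> v \<noteq> 0}"
  have f: "finite ?S" using assms unfolding mono_ok_def by auto
  have "{v. \<beta> v + \<gamma> v \<noteq> 0} = ?S" by auto
  then have m1: "mono_ok r (\<lambda>v. \<beta> v + \<gamma> v)" using assms f unfolding mono_ok_def by auto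
  have "mdeg (\<lambda>v. \<beta> v + \<gamma> v) = sum (\<lambda>v. \<beta> v + \<gamma> v) ?S" by (rule mdeg_superset[OF f]) auto
  also have "\<dots> = sum \<beta> ?S + sum \<gamma> ?S" by (simp add: sum.distrib)
  also have "\<dots> = mdeg \<beta> + mdeg \<gamma>" using mdeg_superset[OF f, of \<beta>] mdeg_superset[OF f, of \<gamma>] by auto
  finally show ?thesis using m1 by simp
qed

lemma dsupp_mult:
  assumes "dsupp r a F" "dsupp r b G" shows "dsupp r (a + b) (ser_mult F G)"
  unfolding dsupp_def
proof (intro allI impI)
  fix \<alpha> assume "ser_mult F G \<alpha> \<noteq> 0"
  then obtain \<beta> where b: "\<forall>v. \<beta> v \<le> \<alpha> v" "F \<beta> \<noteq> 0" "G (\<lambda>v. \<alpha> v - \<beta> v) \<noteq> 0" using ser_mult_nz by blast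
  have e: "\<alpha> = (\<lambda>v. \<beta> v + (\<alpha> v - \<beta> v))" using b(1) by (auto simp: fun_eq_iff)
  have "mono_ok r \<beta>" "mdeg \<beta> = a" using assms(1) b(2) unfolding dsupp_def by auto
  moreover have "mono_ok r (\<lambda>v. \<alpha> v - \<beta> v)" "mdeg (\<lambda>v. \<alpha> v - \<beta> v) = b" using assms(2) b(3) unfolding dsupp_def by auto
  ultimately show "mono_ok r \<alpha> \<and> mdeg \<alpha> = a + b"
    using mono_ok_add[of r \<beta> "\<lambda>v. \<alpha> v - \<beta> v"] e by metis
qed

lemma dsupp_one: "dsupp r 0 ser_one"
proof -
  have "(\<lambda>v. 0) = \<alpha> \<Longrightarrow> mono_ok r \<alpha> \<and> mdeg \<alpha> = 0" for \<alpha> :: mono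
    by (auto simp: mono_ok_def mdeg_def)
  then show ?thesis unfolding dsupp_def ser_one_def by (auto split: if_splits simp: fun_eq_iff)
qed

lemma dsupp_prod:
  "(\<And>F d. (F, d) \<in> set xs \<Longrightarrow> dsupp r d F) \<Longrightarrow> dsupp r (sum_list (map snd xs)) (ser_prod (map fst xs))"
proof (induction xs)
  case Nil then show ?case by (simp add: ser_prod_Nil dsupp_one)
next
  case (Cons x xs) then show ?case by (cases x) (simp add: ser_prod_Cons dsupp_mult)
qed

lemma dsupp_sum: "(\<And>i. i \<in> A \<Longrightarrow> dsupp r d (f i)) \<Longrightarrow> dsupp r d (\<lambda>\<alpha>. \<Sum>i\<in>A. f i \<alpha>)"
  unfolding dsupp_def by (metis (mono_tags, lifting) sum.not_neutral_contains_not_neutral)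

lemma dsupp_scale: "dsupp r d F \<Longrightarrow> dsupp r d (\<lambda>\<alpha>. (c::'a::comm_ring_1) * F \<alpha>)"
  unfolding dsupp_def by (metis mult_zero_right)

lemma dsupp_e: "k \<in> {1..r} \<Longrightarrow> dsupp r j (e_ser k j)"
  unfolding dsupp_def e_ser_def in_fam_def mono_ok_def by (auto split: if_splits)

lemma dsupp_h: "k \<in> {1..r} \<Longrightarrow> dsupp r j (h_ser k j)"
  unfolding dsupp_def h_ser_def in_fam_def mono_ok_def by (auto split: if_splits)

lemma dsupp_q: "k \<in> {1..r} \<Longrightarrow> k' \<in> {1..r} \<Longrightarrow> dsupp r s (q_ser k k' t s)"
proof -
  assume k: "k \<in> {1..r}" "k' \<in> {1..r}"
  have "dsupp r s (\<lambda>\<alpha>. \<Sum>j\<in>{0..s}. (- t) ^ j * ser_mult (e_ser k' j) (h_ser k (s - j)) \<alpha>)"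
  proof (intro dsupp_sum dsupp_scale)
    fix j assume "j \<in> {0..s}"
    then have "s = j + (s - j)" by auto
    then show "dsupp r s (ser_mult (e_ser k' j) (h_ser k (s - j)))"
      using dsupp_mult[OF dsupp_e[OF k(2)] dsupp_h[OF k(1)], of j "s - j"] by simp
  qed
  then show ?thesis unfolding q_ser_def[abs_def] by simp
qed

lemma rws_set: "(k, s) \<in> set (rws r lam) \<Longrightarrow> k \<in> {1..r} \<and> s \<in> set (lam k)"
  unfolding rws_def by auto

lemma sum_list_concat': "sum_list (concat xss) = sum_list (map sum_list (xss::'a::monoid_add list list))"
  by (induct xss) auto

lemma sum_rws: "sum_list (map snd (rws r lam)) = (\<Sum>k=1..r. sum_list (lam k))"
proof -
  have "sum_list (map snd (rws r lam)) = sum_list (map (\<lambda>k. sum_list (lam k)) [1..<r+1])"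
    unfolding rws_def by (simp add: map_concat sum_list_concat' comp_def)
  also have "\<dots> = (\<Sum>k=1..r. sum_list (lam k))"
    by (metis atLeastLessThanSuc_atLeastAtMost Suc_eq_plus1 set_upt sum_set_upt_conv_sum_list_nat)
  finally show ?thesis .
qed

lemma dsupp_qg:
  assumes "\<And>k. k \<in> {1..r} \<Longrightarrow> \<phi> k \<in> {1..r}" "lam \<in> multipart r n"
  shows "dsupp r n (qg r \<phi> T lam)"
proof -
  let ?xs = "map (\<lambda>(k,s). (q_ser k (\<phi> k) (T k) s, s)) (rws r lam)"
  have "dsupp r (sum_list (map snd ?xs)) (ser_prod (map fst ?xs))"
    by (rule dsupp_prod) (auto dest!: rws_set intro!: dsupp_q assms(1))
  moreover have "ser_prod (map fst ?xs) = qg r \<phi> T lam" unfolding qg_def by (simp add: comp_def case_prod_unfold)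
  moreover have "sum_list (map snd ?xs) = n"
  proof -
    have "map snd ?xs = map snd (rws r lam)" by (auto simp: case_prod_unfold)
    then have "sum_list (map snd ?xs) = (\<Sum>k=1..r. sum_list (lam k))" by (simp only: sum_rws)
    with assms(2) show ?thesis unfolding multipart_def by simp
  qed
  ultimately show ?thesis by simp
qed

definition perm :: "(nat \<Rightarrow> nat \<Rightarrow> nat) \<Rightarrow> mono \<Rightarrow> mono" where
  "perm \<pi> \<alpha> = (\<lambda>(k,i). \<alpha> (k, \<pi> k i))"

definition symm :: "(mono \<Rightarrow> 'a) \<Rightarrow> bool" where
  "symm F \<longleftrightarrow> (\<forall>\<pi>. (\<forall>k. bij (\<pi> k)) \<longrightarrow> (\<forall>\<alpha>. F (perm \<pi> \<alpha>) = F \<alpha>))"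

definition pg :: "(nat \<Rightarrow> nat \<Rightarrow> nat) \<Rightarrow> nat \<times> nat \<Rightarrow> nat \<times> nat" where
  "pg \<pi> = (\<lambda>(k,i). (k, \<pi> k i))"

lemma perm_pg: "perm \<pi> \<alpha> = \<alpha> \<circ> pg \<pi>"
  by (simp add: perm_def pg_def fun_eq_iff)

lemma bij_pg: "(\<And>k. bij (\<pi> k)) \<Longrightarrow> bij (pg \<pi>)"
proof -
  assume b: "\<And>k. bij (\<pi> k)"
  have "inj (pg \<pi>)" unfolding inj_def pg_def using b by (auto simp: bij_def inj_def)
  moreover have "surj (pg \<pi>)"
  proof -
    have "(k, j) \<in> range (pg \<pi>)" for k j
    proof -
      obtain i where "\<pi> k i = j" using b[of k] by (metis bij_pointE)
      then have "(k, j) = pg \<pi> (k, i)" by (simp add: pg_def)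
      then show ?thesis by blast
    qed
    then show ?thesis by (metis surj_def surjective_pairing rangeE)
  qed
  ultimately show ?thesis by (simp add: bij_def)
qed

lemma fst_pg[simp]: "fst (pg \<pi> v) = fst v" by (simp add: pg_def case_prod_unfold)

lemma mdeg_comp_bij: assumes "bij g" "finite {v. \<alpha> v \<noteq> 0}" shows "mdeg (\<alpha> \<circ> g) = mdeg \<alpha>"
proof -
  have e: "{v. (\<alpha> \<circ> g) v \<noteq> 0} = g -` {v. \<alpha> v \<noteq> 0}" by auto
  have "g ` (g -` {v. \<alpha> v \<noteq> 0}) = {v. \<alpha> v \<noteq> 0}" by (metis assms(1) bij_is_surj surj_image_vimage_eq)
  moreover have "inj_on g (g -` {v. \<alpha> v \<noteq> 0})" using assms(1) by (meson bij_is_inj inj_on_subset subset_UNIV)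
  ultimately have "sum \<alpha> {v. \<alpha> v \<noteq> 0} = sum (\<alpha> \<circ> g) (g -` {v. \<alpha> v \<noteq> 0})"
    by (metis sum.reindex)
  then show ?thesis unfolding mdeg_def e by simp
qed

lemma finite_comp_bij: assumes "bij g" shows "finite {v. (\<alpha> \<circ> g) v \<noteq> 0} \<longleftrightarrow> finite {v. \<alpha> v \<noteq> 0}"
proof -
  have e: "{v. (\<alpha> \<circ> g) v \<noteq> 0} = g -` {v. \<alpha> v \<noteq> 0}" by auto
  show ?thesis unfolding e using assms
    by (metis bij_betw_finite bij_betw_subset bij_is_surj subset_UNIV surj_image_vimage_eq bij_vimage_eq_inv_image)
qed

lemma in_fam_perm: "(\<And>k. bij (\<pi> k)) \<Longrightarrow> in_fam k (perm \<pi> \<alpha>) \<longleftrightarrow> in_fam k \<alpha>"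
proof -
  assume b: "\<And>k. bij (\<pi> k)"
  have fin: "finite {v. perm \<pi> \<alpha> v \<noteq> 0} \<longleftrightarrow> finite {v. \<alpha> v \<noteq> 0}"
    unfolding perm_pg by (rule finite_comp_bij[OF bij_pg[OF b]])
  have "(\<forall>k' i. perm \<pi> \<alpha> (k', i) \<noteq> 0 \<longrightarrow> k' = k) \<longleftrightarrow> (\<forall>k' i. \<alpha> (k', i) \<noteq> 0 \<longrightarrow> k' = k)"
  proof
    assume h: "\<forall>k' i. perm \<pi> \<alpha> (k', i) \<noteq> 0 \<longrightarrow> k' = k"
    show "\<forall>k' i. \<alpha> (k', i) \<noteq> 0 \<longrightarrow> k' = k"
    proof (intro allI impI)
      fix k' j assume "\<alpha> (k', j) \<noteq> 0"
      obtain i where "\<pi> k' i = j" using b[of k'] by (metis bij_pointE)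
      then show "k' = k" using h \<open>\<alpha> (k', j) \<noteq> 0\<close> by (auto simp: perm_def)
    qed
  qed (auto simp: perm_def)
  then show ?thesis using fin unfolding in_fam_def by simp
qed

lemma le1_perm: "(\<And>k. bij (\<pi> k)) \<Longrightarrow> (\<forall>v. perm \<pi> \<alpha> v \<le> 1) \<longleftrightarrow> (\<forall>v. \<alpha> v \<le> (1::nat))"
proof -
  assume b: "\<And>k. bij (\<pi> k)"
  have "surj (pg \<pi>)" using bij_pg[OF b] by (simp add: bij_is_surj)
  show ?thesis unfolding perm_pg
  proof
    assume h: "\<forall>v. (\<alpha> \<circ> pg \<pi>) v \<le> 1"
    show "\<forall>v. \<alpha> v \<le> 1"
    proof
      fix v obtain w where "v = pg \<pi> w" using \<open>surj (pg \<pi>)\<close> by (metis surjD)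
      then show "\<alpha> v \<le> 1" using h by (metis comp_apply)
    qed
  next
    assume "\<forall>v. \<alpha> v \<le> 1" then show "\<forall>v. (\<alpha> \<circ> pg \<pi>) v \<le> 1" by (simp only: comp_apply) blast
  qed
qed

lemma mdeg_perm: "(\<And>k. bij (\<pi> k)) \<Longrightarrow> finite {v. \<alpha> v \<noteq> 0} \<Longrightarrow> mdeg (perm \<pi> \<alpha>) = mdeg \<alpha>"
  unfolding perm_pg by (rule mdeg_comp_bij[OF bij_pg])

lemma symm_e: "symm (e_ser k j)"
  unfolding symm_def
proof (intro allI impI)
  fix \<pi> :: "nat \<Rightarrow> nat \<Rightarrow> nat" and \<alpha> assume b0: "\<forall>k. bij (\<pi> k)"
  then have b: "\<And>k. bij (\<pi> k)" by blast
  have i: "in_fam k (perm \<pi> \<alpha>) \<longleftrightarrow> in_fam k \<alpha>" using in_fam_perm[of \<pi> k \<alpha>] b by blast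
  have l: "(\<forall>v. perm \<pi> \<alpha> v \<le> 1) \<longleftrightarrow> (\<forall>v. \<alpha> v \<le> 1)" using le1_perm[of \<pi> \<alpha>] b by blast
  have m: "in_fam k \<alpha> \<Longrightarrow> mdeg (perm \<pi> \<alpha>) = mdeg \<alpha>" using mdeg_perm[of \<pi> \<alpha>] b unfolding in_fam_def by blast
  show "e_ser k j (perm \<pi> \<alpha>) = e_ser k j \<alpha>" unfolding e_ser_def using i l m by (simp only:) presburger
qed

lemma symm_h: "symm (h_ser k j)"
  unfolding symm_def
proof (intro allI impI)
  fix \<pi> :: "nat \<Rightarrow> nat \<Rightarrow> nat" and \<alpha> assume b0: "\<forall>k. bij (\<pi> k)"
  then have b: "\<And>k. bij (\<pi> k)" by blast
  have i: "in_fam k (perm \<pi> \<alpha>) \<longleftrightarrow> in_fam k \<alpha>" using in_fam_perm[of \<pi> k \<alpha>] b by blast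
  have m: "in_fam k \<alpha> \<Longrightarrow> mdeg (perm \<pi> \<alpha>) = mdeg \<alpha>" using mdeg_perm[of \<pi> \<alpha>] b unfolding in_fam_def by blast
  show "h_ser k j (perm \<pi> \<alpha>) = h_ser k j \<alpha>" unfolding h_ser_def using i m by (simp only:) presburger
qed

lemma symm_one: "symm ser_one"
proof -
  { fix \<pi> :: "nat \<Rightarrow> nat \<Rightarrow> nat" and \<alpha> assume b: "\<And>k. bij (\<pi> k)"
    have s: "surj (pg \<pi>)" using bij_pg[OF b] by (simp add: bij_is_surj)
    have "(\<forall>v. perm \<pi> \<alpha> v = 0) \<longleftrightarrow> (\<forall>v. \<alpha> v = 0)" unfolding perm_pg using s by (metis comp_apply surjD)
  }
  then show ?thesis unfolding symm_def ser_one_def by simp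
qed

lemma perm_inv: assumes "\<And>k. bij (\<pi> k)" shows "perm \<pi> (perm (\<lambda>k. Hilbert_Choice.inv (\<pi> k)) \<beta>) = \<beta>"
  using assms by (simp add: perm_def fun_eq_iff inv_f_f bij_is_inj)

lemma inj_perm: assumes "\<And>k. bij (\<pi> k)" shows "inj (perm \<pi>)"
proof (rule injI)
  fix x y assume "perm \<pi> x = perm \<pi> y"
  then have "x \<circ> pg \<pi> = y \<circ> pg \<pi>" by (simp add: perm_pg)
  moreover have "surj (pg \<pi>)" using bij_pg[OF assms] by (simp add: bij_is_surj)
  ultimately show "x = y"
  proof -
    assume e: "x \<circ> pg \<pi> = y \<circ> pg \<pi>" and s: "surj (pg \<pi>)"
    show "x = y"
    proof
      fix v obtain w where "v = pg \<pi> w" using s by (metis surjD)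
      then show "x v = y v" using e by (metis comp_apply)
    qed
  qed
qed

lemma symm_mult: assumes "symm F" "symm G" shows "symm (ser_mult F G)"
  unfolding symm_def
proof (intro allI impI)
  fix \<pi> :: "nat \<Rightarrow> nat \<Rightarrow> nat" and \<alpha> assume b: "\<forall>k. bij (\<pi> k)"
  let ?A = "{\<beta>::mono. \<forall>v. \<beta> v \<le> \<alpha> v}"
  have img: "{\<beta>. \<forall>v. \<beta> v \<le> perm \<pi> \<alpha> v} = perm \<pi> ` ?A"
  proof -
    have 1: "\<beta> \<in> perm \<pi> ` ?A" if h: "\<forall>v. \<beta> v \<le> perm \<pi> \<alpha> v" for \<beta>
    proof -
      let ?\<beta>' = "perm (\<lambda>k. Hilbert_Choice.inv (\<pi> k)) \<beta>"
      have "\<forall>v. ?\<beta>' v \<le> \<alpha> v"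
      proof
        fix v :: "nat \<times> nat" obtain k i where v: "v = (k, i)" by fastforce
        have "?\<beta>' v = \<beta> (k, Hilbert_Choice.inv (\<pi> k) i)" by (simp add: perm_def v)
        also have "\<dots> \<le> perm \<pi> \<alpha> (k, Hilbert_Choice.inv (\<pi> k) i)" using h by blast
        also have "\<dots> = \<alpha> v" using bij_is_surj[OF b[rule_format, of k]] by (simp add: perm_def v surj_f_inv_f)
        finally show "?\<beta>' v \<le> \<alpha> v" .
      qed
      moreover have "\<beta> = perm \<pi> ?\<beta>'" using perm_inv[of \<pi> \<beta>] b by simp
      ultimately show "\<beta> \<in> perm \<pi> ` ?A" by blast
    qed
    have 2: "\<forall>v. \<beta> v \<le> perm \<pi> \<alpha> v" if "\<beta> \<in> perm \<pi> ` ?A" for \<beta>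
      using that by (auto simp: perm_def)
    show ?thesis using 1 2 by blast
  qed
  have inj: "inj_on (perm \<pi>) ?A" using inj_perm[of \<pi>] b by (meson inj_on_subset subset_UNIV)
  have "ser_mult F G (perm \<pi> \<alpha>) = (\<Sum>\<beta>\<in>perm \<pi> ` ?A. F \<beta> * G (\<lambda>v. perm \<pi> \<alpha> v - \<beta> v))"
    unfolding ser_mult_def img ..
  also have "\<dots> = (\<Sum>\<beta>\<in>?A. F (perm \<pi> \<beta>) * G (\<lambda>v. perm \<pi> \<alpha> v - perm \<pi> \<beta> v))"
    using sum.reindex[OF inj, of "\<lambda>\<beta>. F \<beta> * G (\<lambda>v. perm \<pi> \<alpha> v - \<beta> v)"] by (simp only: comp_def)
  also have "\<dots> = (\<Sum>\<beta>\<in>?A. F \<beta> * G (\<lambda>v. \<alpha> v - \<beta> v))"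
  proof (intro sum.cong refl)
    fix \<beta> have "(\<lambda>v. perm \<pi> \<alpha> v - perm \<pi> \<beta> v) = perm \<pi> (\<lambda>v. \<alpha> v - \<beta> v)" by (auto simp: perm_def fun_eq_iff)
    then show "F (perm \<pi> \<beta>) * G (\<lambda>v. perm \<pi> \<alpha> v - perm \<pi> \<beta> v) = F \<beta> * G (\<lambda>v. \<alpha> v - \<beta> v)"
      using assms b unfolding symm_def by simp
  qed
  finally show "ser_mult F G (perm \<pi> \<alpha>) = ser_mult F G \<alpha>" unfolding ser_mult_def .
qed

lemma symm_prod: "(\<And>F. F \<in> set Fs \<Longrightarrow> symm F) \<Longrightarrow> symm (ser_prod Fs)"
  by (induction Fs) (auto simp: ser_prod_Nil ser_prod_Cons symm_one symm_mult)

lemma symm_sum: "(\<And>i. i \<in> A \<Longrightarrow> symm (f i)) \<Longrightarrow> symm (\<lambda>\<alpha>. \<Sum>i\<in>A. f i \<alpha>)"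
  unfolding symm_def by simp

lemma symm_scale: "symm F \<Longrightarrow> symm (\<lambda>\<alpha>. c * F \<alpha>)"
  unfolding symm_def by simp

lemma symm_q: "symm (q_ser k k' t s)"
proof -
  have "symm (\<lambda>\<alpha>. \<Sum>j\<in>{0..s}. (- t) ^ j * ser_mult (e_ser k' j) (h_ser k (s - j)) \<alpha>)"
    by (intro symm_sum symm_scale symm_mult symm_e symm_h)
  then show ?thesis unfolding q_ser_def[abs_def] by simp
qed

lemma symm_qg: "symm (qg r \<phi> T lam)"
  unfolding qg_def by (rule symm_prod) (auto simp: symm_q)

lemma XiQt_I: "(\<And>\<alpha>. f \<alpha> \<in> Qt r) \<Longrightarrow> dsupp r n f \<Longrightarrow> symm f \<Longrightarrow> f \<in> XiQt r n"
  unfolding XiQt_def dsupp_def symm_def perm_def by auto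

lemma XiQt_D: "f \<in> XiQt r n \<Longrightarrow> (\<forall>\<alpha>. f \<alpha> \<in> Qt r) \<and> dsupp r n f \<and> symm f"
  unfolding XiQt_def dsupp_def symm_def perm_def by auto

lemma phi_plus: "r > 0 \<Longrightarrow> fam r (int k - 1) \<in> {1..r}" by (rule fam_range)
lemma phi_minus: "r > 0 \<Longrightarrow> fam r (int k + 1) \<in> {1..r}" by (rule fam_range)

lemma qplus_XiQt: assumes "r \<ge> 2" "lam \<in> multipart r n" shows "qplus r lam \<in> XiQt r n"
proof -
  have r: "r > 0" using assms by auto
  show ?thesis unfolding qplus_qg
    by (rule XiQt_I[OF qg_Qt[OF tt_Qt[OF r]] dsupp_qg[OF fam_range[OF r] assms(2)] symm_qg])
qed

lemma qminus_XiQt: assumes "r \<ge> 2" "lam \<in> multipart r n" shows "qminus r lam \<in> XiQt r n"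
proof -
  have r: "r > 0" using assms by auto
  show ?thesis unfolding qminus_qg
    by (rule XiQt_I[OF qg_Qt[OF tt_Qt[OF r]] dsupp_qg[OF fam_range[OF r] assms(2)] symm_qg])
qed

definition srt :: "(nat \<Rightarrow> nat) \<Rightarrow> nat list" where
  "srt g = rev (sort_key g (sorted_list_of_set {i. g i \<noteq> 0}))"

definition pmk :: "(nat \<Rightarrow> nat) \<Rightarrow> nat \<Rightarrow> nat" where
  "pmk g i = (if i < length (srt g) then srt g ! i
              else wellorder_class.enumerate (- {i. g i \<noteq> 0}) (i - length (srt g)))"

definition mpart :: "mono \<Rightarrow> nat \<Rightarrow> nat list" where
  "mpart \<alpha> k = map (\<lambda>i. \<alpha> (k, i)) (srt (\<lambda>i. \<alpha> (k, i)))"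

definition amono :: "(nat \<Rightarrow> nat list) \<Rightarrow> mono" where
  "amono \<mu> = (\<lambda>(k, i). if i < length (\<mu> k) then \<mu> k ! i else 0)"

lemma srt_props:
  assumes "finite {i. g i \<noteq> 0}"
  shows "distinct (srt g)" "set (srt g) = {i. g i \<noteq> 0}"
    "sorted_wrt (\<ge>) (map g (srt g))"
proof -
  show "distinct (srt g)" unfolding srt_def using assms by (simp add: distinct_sort)
  show "set (srt g) = {i. g i \<noteq> 0}" unfolding srt_def using assms by (simp add: set_sort)
  have "sorted (map g (sort_key g (sorted_list_of_set {i. g i \<noteq> 0})))" by (rule sorted_sort_key)
  then show "sorted_wrt (\<ge>) (map g (srt g))" unfolding srt_def rev_map[symmetric] sorted_wrt_rev .
qed

lemma bij_pmk:
  assumes fin: "finite {i. g i \<noteq> 0}"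
  shows "bij (pmk g)"
proof -
  let ?S = "{i. g i \<noteq> 0}"
  let ?m = "length (srt g)"
  let ?E = "wellorder_class.enumerate (- ?S)"
  have inf: "infinite (- ?S)" using fin by (simp add: Compl_eq_Diff_UNIV Diff_infinite_finite)
  have sm: "strict_mono ?E" using inf by (rule strict_mono_enumerate)
  have Ein: "?E j \<notin> ?S" for j using enumerate_in_set[OF inf, of j] by simp
  have d: "distinct (srt g)" and st: "set (srt g) = ?S" using srt_props[OF fin] by auto
  have "inj (pmk g)"
  proof (rule injI)
    fix x y assume e: "pmk g x = pmk g y"
    show "x = y"
    proof (cases "x < ?m"; cases "y < ?m")
      assume "x < ?m" "y < ?m" then show ?thesis using e d by (simp add: pmk_def nth_eq_iff_index_eq)
    next
      assume "x < ?m" "\<not> y < ?m"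
      then have "pmk g x \<in> ?S" "pmk g y \<notin> ?S" using st Ein by (auto simp: pmk_def)
      then show ?thesis using e by simp
    next
      assume "\<not> x < ?m" "y < ?m"
      then have "pmk g y \<in> ?S" "pmk g x \<notin> ?S" using st Ein by (auto simp: pmk_def)
      then show ?thesis using e by simp
    next
      assume xy: "\<not> x < ?m" "\<not> y < ?m"
      then have "?E (x - ?m) = ?E (y - ?m)" using e by (simp add: pmk_def)
      then have "x - ?m = y - ?m" using sm by (simp add: strict_mono_eq)
      then show ?thesis using xy by simp
    qed
  qed
  moreover have "surj (pmk g)"
  proof -
    have "y \<in> range (pmk g)" for y
    proof (cases "y \<in> ?S")
      case True
      then obtain i where "i < ?m" "srt g ! i = y" using st by (metis in_set_conv_nth)
      then have "pmk g i = y" by (simp add: pmk_def)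
      then show ?thesis by blast
    next
      case False
      then have "y \<in> range ?E" using range_enumerate[OF inf] by simp
      then obtain j where "?E j = y" by blast
      then have "pmk g (?m + j) = y" by (simp add: pmk_def)
      then show ?thesis by blast
    qed
    then show ?thesis by blast
  qed
  ultimately show ?thesis by (simp add: bij_def)
qed

lemma pmk_val:
  assumes fin: "finite {i. g i \<noteq> 0}"
  shows "g (pmk g i) = (if i < length (srt g) then map g (srt g) ! i else 0)"
proof -
  let ?S = "{i. g i \<noteq> 0}"
  have inf: "infinite (- ?S)" using fin by (simp add: Compl_eq_Diff_UNIV Diff_infinite_finite)
  show ?thesis
  proof (cases "i < length (srt g)")
    case True then show ?thesis by (simp add: pmk_def)
  next
    case False
    have "wellorder_class.enumerate (- ?S) (i - length (srt g)) \<in> - ?S" by (rule enumerate_in_set[OF inf])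
    then show ?thesis using False by (simp add: pmk_def)
  qed
qed

lemma sort_mono:
  assumes ok: "mono_ok r \<alpha>" and deg: "mdeg \<alpha> = n"
  shows "(\<forall>k. bij (pmk (\<lambda>i. \<alpha> (k, i)))) \<and> perm (\<lambda>k. pmk (\<lambda>i. \<alpha> (k, i))) \<alpha> = amono (mpart \<alpha>)
         \<and> mpart \<alpha> \<in> multipart r n"
proof -
  have finA: "finite {v. \<alpha> v \<noteq> 0}" using ok unfolding mono_ok_def by simp
  have fin: "finite {i. \<alpha> (k, i) \<noteq> 0}" for k
  proof -
    have "{i. \<alpha> (k, i) \<noteq> 0} = snd ` ({v. \<alpha> v \<noteq> 0} \<inter> {v. fst v = k})" by force
    then show ?thesis using finA by simp
  qed
  have b: "\<forall>k. bij (pmk (\<lambda>i. \<alpha> (k, i)))" using bij_pmk[OF fin] by blast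
  have p: "perm (\<lambda>k. pmk (\<lambda>i. \<alpha> (k, i))) \<alpha> = amono (mpart \<alpha>)"
  proof (rule ext)
    fix v :: "nat \<times> nat" obtain k i where v: "v = (k, i)" by fastforce
    show "perm (\<lambda>k. pmk (\<lambda>i. \<alpha> (k, i))) \<alpha> v = amono (mpart \<alpha>) v"
      unfolding v perm_def amono_def mpart_def using pmk_val[OF fin, of k i] by simp
  qed
  have m1: "\<forall>k. k \<notin> {1..r} \<longrightarrow> mpart \<alpha> k = []"
  proof (intro allI impI)
    fix k assume "k \<notin> {1..r}"
    then have "{i. \<alpha> (k, i) \<noteq> 0} = {}" using ok unfolding mono_ok_def by auto
    then have "srt (\<lambda>i. \<alpha> (k, i)) = []" using srt_props(2)[OF fin, of k] by simp
    then show "mpart \<alpha> k = []" by (simp add: mpart_def)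
  qed
  have m2: "\<forall>k. sorted_wrt (\<ge>) (mpart \<alpha> k) \<and> 0 \<notin> set (mpart \<alpha> k)"
    using srt_props[OF fin] unfolding mpart_def by auto
  have sl: "sum_list (mpart \<alpha> k) = (\<Sum>i\<in>{i. \<alpha> (k, i) \<noteq> 0}. \<alpha> (k, i))" for k
    unfolding mpart_def using srt_props[OF fin, of k] by (simp add: sum_list_distinct_conv_sum_set)
  have "{v. \<alpha> v \<noteq> 0} = Sigma {1..r} (\<lambda>k. {i. \<alpha> (k, i) \<noteq> 0})"
    using ok unfolding mono_ok_def by auto
  then have "mdeg \<alpha> = (\<Sum>(k, i)\<in>Sigma {1..r} (\<lambda>k. {i. \<alpha> (k, i) \<noteq> 0}). \<alpha> (k, i))"
    unfolding mdeg_def by (simp add: case_prod_beta')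
  also have "\<dots> = (\<Sum>k=1..r. \<Sum>i\<in>{i. \<alpha> (k, i) \<noteq> 0}. \<alpha> (k, i))"
    by (rule sum.Sigma[symmetric]) (use fin in auto)
  finally have "(\<Sum>k=1..r. sum_list (mpart \<alpha> k)) = n" using deg sl by simp
  then have "mpart \<alpha> \<in> multipart r n" using m1 m2 unfolding multipart_def by blast
  then show ?thesis using b p by blast
qed

lemma determ:
  assumes "symm g" "dsupp r n g" "\<forall>\<mu>\<in>multipart r n. g (amono \<mu>) = 0"
  shows "g \<alpha> = 0"
proof (rule ccontr)
  assume "g \<alpha> \<noteq> 0"
  then have ok: "mono_ok r \<alpha>" "mdeg \<alpha> = n" using assms(2) unfolding dsupp_def by auto
  note s = sort_mono[OF ok]
  have b: "\<And>k. bij (pmk (\<lambda>i. \<alpha> (k, i)))" using s by blast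
  have "g (perm (\<lambda>k. pmk (\<lambda>i. \<alpha> (k, i))) \<alpha>) = g \<alpha>"
    by (rule assms(1)[unfolded symm_def, rule_format, OF b])
  then have "g (amono (mpart \<alpha>)) = g \<alpha>" using s by simp
  then show False using assms(3) s \<open>g \<alpha> \<noteq> 0\<close> by simp
qed

lemma coeff_mult_bound:
  fixes p q :: "'a::comm_ring_1 poly"
  assumes "degree p \<le> a" "degree q \<le> b"
  shows "coeff (p * q) (a + b) = coeff p a * coeff q b"
proof -
  have "coeff (p*q) (a+b) = (\<Sum>i\<le>a+b. coeff p i * coeff q (a + b - i))" by (rule coeff_mult)
  also have "\<dots> = (\<Sum>i\<in>{a}. coeff p i * coeff q (a + b - i))"
  proof (rule sum.mono_neutral_right)
    show "finite {..a+b}" by simp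
    show "{a} \<subseteq> {..a+b}" by simp
    show "\<forall>i\<in>{..a+b} - {a}. coeff p i * coeff q (a + b - i) = 0"
    proof
      fix i assume "i \<in> {..a+b} - {a}"
      then have "i < a \<or> i > a" by auto
      then show "coeff p i * coeff q (a+b-i) = 0"
      proof
        assume "i < a" then have "a + b - i > b" by auto
        then have "coeff q (a+b-i) = 0" using assms(2) by (intro coeff_eq_0) auto
        then show ?thesis by simp
      next
        assume "i > a" then have "coeff p i = 0" using assms(1) by (intro coeff_eq_0) auto
        then show ?thesis by simp
      qed
    qed
  qed
  finally show ?thesis by simp
qed

definition sdeg :: "nat \<Rightarrow> (mono \<Rightarrow> 'a::comm_ring_1 poly) \<Rightarrow> bool" where
  "sdeg d F \<longleftrightarrow> (\<forall>\<alpha>. degree (F \<alpha>) \<le> d)"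

definition stop :: "nat \<Rightarrow> (mono \<Rightarrow> 'a::comm_ring_1 poly) \<Rightarrow> mono \<Rightarrow> 'a" where
  "stop d F = (\<lambda>\<alpha>. coeff (F \<alpha>) d)"

lemma sdeg_mult: assumes "sdeg a F" "sdeg b G" shows "sdeg (a + b) (ser_mult F G)"
  unfolding sdeg_def
proof
  fix \<alpha>
  let ?A = "{\<beta>::mono. \<forall>v. \<beta> v \<le> \<alpha> v}"
  show "degree (ser_mult F G \<alpha>) \<le> a + b"
  proof (cases "finite ?A")
    case True
    show ?thesis unfolding ser_mult_def
    proof (rule degree_sum_le[OF True])
      fix \<beta> show "degree (F \<beta> * G (\<lambda>v. \<alpha> v - \<beta> v)) \<le> a + b"
        using assms unfolding sdeg_def by (meson add_mono degree_mult_le order_trans)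
    qed
  next
    case False then show ?thesis unfolding ser_mult_def by simp
  qed
qed

lemma stop_mult: assumes "sdeg a F" "sdeg b G"
  shows "stop (a + b) (ser_mult F G) = ser_mult (stop a F) (stop b G)"
  unfolding stop_def ser_mult_def
  using assms unfolding sdeg_def by (simp add: coeff_sum coeff_mult_bound)

lemma sdeg_one: "sdeg 0 (ser_one :: mono \<Rightarrow> 'a::comm_ring_1 poly)"
  unfolding sdeg_def ser_one_def by simp

lemma stop_one: "stop 0 (ser_one :: mono \<Rightarrow> 'a::comm_ring_1 poly) = ser_one"
  unfolding stop_def ser_one_def by (simp add: fun_eq_iff)

lemma sdeg_prod:
  "(\<And>F d. (F, d) \<in> set xs \<Longrightarrow> sdeg d F) \<Longrightarrow>
   sdeg (sum_list (map snd xs)) (ser_prod (map fst xs)) \<and>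
   stop (sum_list (map snd xs)) (ser_prod (map fst xs)) = ser_prod (map (\<lambda>(F, d). stop d F) xs)"
proof (induction xs)
  case Nil then show ?case by (simp add: ser_prod_Nil sdeg_one stop_one)
next
  case (Cons x xs)
  obtain F d where x: "x = (F, d)" by fastforce
  have IH: "sdeg (sum_list (map snd xs)) (ser_prod (map fst xs))"
    "stop (sum_list (map snd xs)) (ser_prod (map fst xs)) = ser_prod (map (\<lambda>(F, d). stop d F) xs)"
    using Cons by auto
  have F: "sdeg d F" using Cons x by auto
  show ?case unfolding x using IH F by (simp add: ser_prod_Cons sdeg_mult stop_mult)
qed

lemma h0_eq: "h_ser k 0 \<gamma> = (if (\<forall>v. \<gamma> v = 0) then 1 else 0)"
proof -
  have "in_fam k \<gamma> \<and> mdeg \<gamma> = 0 \<longleftrightarrow> (\<forall>v. \<gamma> v = 0)"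
  proof
    assume h: "in_fam k \<gamma> \<and> mdeg \<gamma> = 0"
    then have fin: "finite {v. \<gamma> v \<noteq> 0}" unfolding in_fam_def by simp
    have "sum \<gamma> {v. \<gamma> v \<noteq> 0} = 0" using h unfolding mdeg_def by simp
    then show "\<forall>v. \<gamma> v = 0" using fin by simp
  next
    assume "\<forall>v. \<gamma> v = 0" then have "\<gamma> = (\<lambda>_. 0)" by auto
    then show "in_fam k \<gamma> \<and> mdeg \<gamma> = 0"
      unfolding in_fam_def mdeg_def by simp
  qed
  then show ?thesis unfolding h_ser_def by simp
qed

lemma e_h0: "ser_mult (e_ser k' s) (h_ser k 0) \<alpha> = (e_ser k' s \<alpha> :: 'a::comm_ring_1)"
proof -
  let ?A = "{\<beta>::mono. \<forall>v. \<beta> v \<le> \<alpha> v}"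
  have t: "e_ser k' s \<beta> * h_ser k 0 (\<lambda>v. \<alpha> v - \<beta> v) = (if \<beta> = \<alpha> then e_ser k' s \<alpha> else (0::'a))"
    if "\<beta> \<in> ?A" for \<beta>
  proof -
    have "(\<forall>v. \<alpha> v - \<beta> v = 0) \<longleftrightarrow> \<beta> = \<alpha>" using that by (auto simp: fun_eq_iff intro: antisym)
    then show ?thesis by (simp add: h0_eq)
  qed
  show ?thesis
  proof (cases "finite ?A")
    case True
    have "ser_mult (e_ser k' s) (h_ser k 0) \<alpha> = (\<Sum>\<beta>\<in>?A. if \<beta> = \<alpha> then e_ser k' s \<alpha> else (0::'a))"
      unfolding ser_mult_def by (rule sum.cong) (auto simp: t)
    also have "\<dots> = e_ser k' s \<alpha>" using True by (simp add: sum.delta')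
    finally show ?thesis .
  next
    case False
    then have "\<not> finite {v. \<alpha> v \<noteq> 0}" using finite_le_set by blast
    then have "e_ser k' s \<alpha> = (0::'a)" unfolding e_ser_def in_fam_def by simp
    then show ?thesis using False unfolding ser_mult_def by simp
  qed
qed

abbreviation XX :: "rat poly" where "XX \<equiv> [:0, 1:]"

lemma q_term: "(- XX) ^ j * [:c:] = monom ((-1) ^ j * c) j"
proof -
  have x: "XX = monom 1 1" by (simp only: One_nat_def monom_Suc monom_0)
  have p: "(- XX) ^ j = monom ((-1) ^ j) j" unfolding x minus_monom monom_power by simp
  have "[:c:] = monom c 0" by (simp only: monom_0)
  then show ?thesis unfolding p by (simp only: mult_monom add_0_right)
qed

lemma ser_mult_const: "ser_mult (e_ser a b) (h_ser c d) \<alpha> = [: ser_mult (e_ser a b) (h_ser c d) \<alpha> :: rat :]"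
proof -
  have "[: ser_mult (e_ser a b) (h_ser c d) \<alpha> :: rat :] = ser_mult ((\<lambda>x. [:x:]) \<circ> e_ser a b) ((\<lambda>x. [:x:]) \<circ> h_ser c d) \<alpha>"
    by (rule cpoly.hom_ser_mult)
  then show ?thesis unfolding cpoly.hom_e_ser cpoly.hom_h_ser by (rule sym)
qed

lemma q_ser_X: "q_ser k k' XX s \<alpha> = (\<Sum>j\<in>{0..s}. monom ((-1) ^ j * ser_mult (e_ser k' j) (h_ser k (s - j)) \<alpha>) j)"
proof -
  have "ser_mult (e_ser k' j) (h_ser k (s - j)) \<alpha> = [: ser_mult (e_ser k' j) (h_ser k (s - j)) \<alpha> :: rat :]" for j
    by (rule ser_mult_const)
  then show ?thesis unfolding q_ser_def by (simp only: q_term)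
qed

lemma q_top: "sdeg s (q_ser k k' XX s)" "stop s (q_ser k k' XX s) = (\<lambda>\<alpha>. (-1) ^ s * e_ser k' s \<alpha>)"
proof -
  show "sdeg s (q_ser k k' XX s)" unfolding sdeg_def q_ser_X
    by (intro allI degree_sum_le) (auto intro: order_trans[OF degree_monom_le])
  show "stop s (q_ser k k' XX s) = (\<lambda>\<alpha>. (-1) ^ s * e_ser k' s \<alpha>)"
    unfolding stop_def q_ser_X by (simp add: fun_eq_iff coeff_sum coeff_monom e_h0)
qed

lemma qg_top:
  assumes "lam \<in> multipart r n"
  shows "sdeg n (qg r \<phi> (\<lambda>_. XX) lam)"
    "stop n (qg r \<phi> (\<lambda>_. XX) lam) = ser_prod (map (\<lambda>(k, s). (\<lambda>\<alpha>. (-1) ^ s * e_ser (\<phi> k) s \<alpha>)) (rws r lam))"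
proof -
  let ?xs = "map (\<lambda>(k,s). (q_ser k (\<phi> k) XX s, s)) (rws r lam)"
  have h: "sdeg (sum_list (map snd ?xs)) (ser_prod (map fst ?xs)) \<and>
   stop (sum_list (map snd ?xs)) (ser_prod (map fst ?xs)) = ser_prod (map (\<lambda>(F, d). stop d F) ?xs)"
  proof (rule sdeg_prod)
    fix F d assume "(F, d) \<in> set ?xs"
    then obtain k where "F = q_ser k (\<phi> k) XX d" by auto
    then show "sdeg d F" by (simp only: q_top)
  qed
  have e1: "ser_prod (map fst ?xs) = qg r \<phi> (\<lambda>_. XX) lam" unfolding qg_def by (simp add: comp_def case_prod_unfold)
  have "map snd ?xs = map snd (rws r lam)" by (auto simp: case_prod_unfold)
  then have "sum_list (map snd ?xs) = (\<Sum>k=1..r. sum_list (lam k))" by (simp only: sum_rws)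
  then have e2: "sum_list (map snd ?xs) = n" using assms unfolding multipart_def by simp
  have e3: "map (\<lambda>(F, d). stop d F) ?xs = map (\<lambda>(k, s). (\<lambda>\<alpha>. (-1) ^ s * e_ser (\<phi> k) s \<alpha>)) (rws r lam)"
    unfolding map_map by (rule map_cong[OF refl]) (simp only: comp_def case_prod_unfold fst_conv snd_conv q_top)
  show "sdeg n (qg r \<phi> (\<lambda>_. XX) lam)" using h[unfolded e1 e2] by blast
  show "stop n (qg r \<phi> (\<lambda>_. XX) lam) = ser_prod (map (\<lambda>(k, s). (\<lambda>\<alpha>. (-1) ^ s * e_ser (\<phi> k) s \<alpha>)) (rws r lam))"
    using h[unfolded e1 e2 e3] by blast
qed

lemma ser_mult_scale: "ser_mult (\<lambda>\<alpha>. c * F \<alpha>) G \<alpha> = c * ser_mult F G \<alpha>"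
  unfolding ser_mult_def by (simp add: sum_distrib_left mult.assoc)

lemma ser_prod_scale:
  "ser_prod (map (\<lambda>x. (\<lambda>\<alpha>. c x * F x \<alpha>)) xs) \<alpha> = prod_list (map c xs) * ser_prod (map F xs) \<alpha>"
proof (induction xs arbitrary: \<alpha>)
  case Nil then show ?case by (simp add: ser_prod_Nil)
next
  case (Cons x xs)
  have "ser_prod (map (\<lambda>x. (\<lambda>\<alpha>. c x * F x \<alpha>)) xs) = (\<lambda>\<alpha>. prod_list (map c xs) * ser_prod (map F xs) \<alpha>)"
    using Cons by (simp add: fun_eq_iff)
  then show ?case
    by (simp add: ser_prod_Cons ser_mult_scale ser_mult_def sum_distrib_left mult_ac)
qed

lemma prod_top:
  fixes f :: "'b \<Rightarrow> 'a::comm_ring_1 poly"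
  assumes "finite I" "\<forall>i\<in>I. degree (f i) \<le> d"
  shows "degree (prod f I) \<le> d * card I \<and> coeff (prod f I) (d * card I) = (\<Prod>i\<in>I. coeff (f i) d)"
  using assms
proof (induction I rule: finite_induct)
  case empty then show ?case by simp
next
  case (insert x F)
  have dx: "degree (f x) \<le> d" using insert by auto
  have IH: "degree (prod f F) \<le> d * card F" "coeff (prod f F) (d * card F) = (\<Prod>i\<in>F. coeff (f i) d)"
    using insert by auto
  have "degree (f x * prod f F) \<le> d + d * card F"
    using dx IH(1) by (meson add_mono degree_mult_le order_trans)
  moreover have "coeff (f x * prod f F) (d + d * card F) = coeff (f x) d * coeff (prod f F) (d * card F)"
    by (rule coeff_mult_bound[OF dx IH(1)])
  ultimately show ?case using insert IH by simp
qed

lemma det_top: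
  fixes M :: "'a::comm_ring_1 poly mat"
  assumes M: "M \<in> carrier_mat N N" and deg: "\<And>i j. i < N \<Longrightarrow> j < N \<Longrightarrow> degree (M $$ (i, j)) \<le> d"
  shows "coeff (det M) (d * N) = det (mat N N (\<lambda>(i, j). coeff (M $$ (i, j)) d))"
proof -
  let ?C = "mat N N (\<lambda>(i, j). coeff (M $$ (i, j)) d)"
  have C: "?C \<in> carrier_mat N N" by simp
  have tm: "coeff (of_int (sign p) * (\<Prod>i = 0..<N. M $$ (i, p i))) (d * N) =
      of_int (sign p) * (\<Prod>i = 0..<N. ?C $$ (i, p i))" if p: "p permutes {0..<N}" for p
  proof -
    have pi: "i < N \<Longrightarrow> p i < N" for i using permutes_in_image[OF p] by simp
    have pt: "coeff (\<Prod>i = 0..<N. M $$ (i, p i)) (d * N) = (\<Prod>i = 0..<N. coeff (M $$ (i, p i)) d)"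
      using prod_top[of "{0..<N}" "\<lambda>i. M $$ (i, p i)" d] deg pi by simp
    have pc: "(\<Prod>i = 0..<N. ?C $$ (i, p i)) = (\<Prod>i = 0..<N. coeff (M $$ (i, p i)) d)"
      by (intro prod.cong refl) (simp add: pi)
    have "sign p = 1 \<or> sign p = -1" by (simp add: sign_def)
    then show ?thesis using pt pc by auto
  qed
  show ?thesis unfolding det_def'[OF M] det_def'[OF C] coeff_sum by (intro sum.cong refl tm) simp
qed

lemma det_tri:
  fixes A :: "'a::idom mat" and w :: "nat \<Rightarrow> nat"
  assumes A: "A \<in> carrier_mat N N"
    and le: "\<And>i j. i < N \<Longrightarrow> j < N \<Longrightarrow> A $$ (i, j) \<noteq> 0 \<Longrightarrow> w j \<le> w i"
    and eq: "\<And>i j. i < N \<Longrightarrow> j < N \<Longrightarrow> A $$ (i, j) \<noteq> 0 \<Longrightarrow> w j = w i \<Longrightarrow> j = i"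
    and diag: "\<And>i. i < N \<Longrightarrow> A $$ (i, i) \<noteq> 0"
  shows "det A \<noteq> 0"
proof -
  let ?P = "{p. p permutes {0..<N}}"
  have zero: "(\<Prod>i = 0..<N. A $$ (i, p i)) = 0" if p: "p permutes {0..<N}" and pid: "p \<noteq> id" for p
  proof (rule ccontr)
    assume "(\<Prod>i = 0..<N. A $$ (i, p i)) \<noteq> 0"
    then have nz: "\<And>i. i < N \<Longrightarrow> A $$ (i, p i) \<noteq> 0" by auto
    have pi: "i < N \<Longrightarrow> p i < N" for i using permutes_in_image[OF p] by simp
    have l: "\<And>i. i \<in> {0..<N} \<Longrightarrow> w (p i) \<le> w i" using le nz pi by auto
    have s: "sum w {0..<N} = sum (w \<circ> p) {0..<N}" by (rule sum.permute[OF p])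
    have all: "w (p i) = w i" if i: "i < N" for i
    proof (rule ccontr)
      assume "w (p i) \<noteq> w i"
      then have "w (p i) < w i" using l[of i] i by auto
      then have "sum (w \<circ> p) {0..<N} < sum w {0..<N}"
        using i l by (intro sum_strict_mono_ex1) auto
      then show False using s by simp
    qed
    have "p i = i" for i
    proof (cases "i < N")
      case True then show ?thesis using eq[of i "p i"] nz all pi by auto
    next
      case False then show ?thesis using p unfolding permutes_def by auto
    qed
    then have "p = id" by (simp add: fun_eq_iff)
    then show False using pid by simp
  qed
  have "det A = (\<Sum>p\<in>?P. of_int (sign p) * (\<Prod>i = 0..<N. A $$ (i, p i)))" by (rule det_def'[OF A])
  also have "\<dots> = (\<Sum>p\<in>?P. if p = id then (\<Prod>i = 0..<N. A $$ (i, i)) else 0)"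
    by (intro sum.cong refl) (auto simp: zero sign_id)
  also have "\<dots> = (\<Prod>i = 0..<N. A $$ (i, i))" by (simp add: sum.delta finite_permutations permutes_id)
  also have "\<dots> \<noteq> 0" using diag by auto
  finally show ?thesis .
qed

definition ind :: "(nat \<times> nat) set \<Rightarrow> mono" where "ind D = (\<lambda>v. if v \<in> D then 1 else 0)"
definition W :: "mono \<Rightarrow> nat" where "W \<alpha> = (\<Sum>v\<in>{v. \<alpha> v \<noteq> 0}. (\<alpha> v)^2)"
abbreviation cnt :: "nat list \<Rightarrow> nat \<Rightarrow> nat" where "cnt l p \<equiv> length (filter (\<lambda>x. p < x) l)"

lemma ser_prod_nz_tuple:
  "ser_prod Fs \<alpha> \<noteq> 0 \<Longrightarrow> \<exists>bs. length bs = length Fs \<and> (\<forall>i<length Fs. (Fs ! i) (bs ! i) \<noteq> 0)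
     \<and> (\<forall>v. \<alpha> v = (\<Sum>i<length Fs. (bs ! i) v))"
proof (induction Fs arbitrary: \<alpha>)
  case Nil
  then have "\<forall>v. \<alpha> v = 0" by (simp add: ser_prod_Nil ser_one_def split: if_splits)
  then show ?case by (intro exI[of _ "[]"]) simp
next
  case (Cons F Fs)
  then have "ser_mult F (ser_prod Fs) \<alpha> \<noteq> 0" by (simp add: ser_prod_Cons)
  then obtain \<beta> where b: "\<forall>v. \<beta> v \<le> \<alpha> v" "F \<beta> \<noteq> 0" "ser_prod Fs (\<lambda>v. \<alpha> v - \<beta> v) \<noteq> 0"
    using ser_mult_nz by blast
  obtain bs where bs: "length bs = length Fs" "\<forall>i<length Fs. (Fs ! i) (bs ! i) \<noteq> 0"
    "\<forall>v. \<alpha> v - \<beta> v = (\<Sum>i<length Fs. (bs ! i) v)"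
    using Cons.IH[OF b(3)] by blast
  have 1: "length (\<beta> # bs) = length (F # Fs)" using bs by simp
  have 2: "\<forall>i<length (F # Fs). ((F # Fs) ! i) ((\<beta> # bs) ! i) \<noteq> 0"
  proof (intro allI impI)
    fix i assume "i < length (F # Fs)"
    then show "((F # Fs) ! i) ((\<beta> # bs) ! i) \<noteq> 0" using b bs by (cases i) auto
  qed
  have 3: "\<forall>v. \<alpha> v = (\<Sum>i<length (F # Fs). ((\<beta> # bs) ! i) v)"
  proof
    fix v
    have "(\<Sum>i<length (F # Fs). ((\<beta> # bs) ! i) v) = \<beta> v + (\<Sum>i<length Fs. (bs ! i) v)"
      by (simp only: length_Cons sum.lessThan_Suc_shift nth_Cons_0 nth_Cons_Suc)
    also have "\<dots> = \<beta> v + (\<alpha> v - \<beta> v)" using bs(3)[rule_format, of v] by simp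
    also have "\<dots> = \<alpha> v" using b(1)[rule_format, of v] by simp
    finally show "\<alpha> v = (\<Sum>i<length (F # Fs). ((\<beta> # bs) ! i) v)" by simp
  qed
  show ?case using 1 2 3 by blast
qed

lemma ser_prod_nonneg: "(\<And>F \<beta>. F \<in> set Fs \<Longrightarrow> F \<beta> \<ge> (0::rat)) \<Longrightarrow> ser_prod Fs \<alpha> \<ge> 0"
proof (induction Fs arbitrary: \<alpha>)
  case Nil then show ?case by (simp add: ser_prod_Nil ser_one_def)
next
  case (Cons F Fs)
  then show ?case unfolding ser_prod_Cons ser_mult_def by (intro sum_nonneg mult_nonneg_nonneg) auto
qed

lemma ser_prod_pos_tuple:
  "(\<And>F \<beta>. F \<in> set Fs \<Longrightarrow> F \<beta> \<ge> (0::rat)) \<Longrightarrow> length bs = length Fs \<Longrightarrow>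
   (\<forall>i<length Fs. (Fs ! i) (bs ! i) > 0) \<Longrightarrow> finite {v. \<alpha> v \<noteq> 0} \<Longrightarrow>
   (\<forall>v. \<alpha> v = (\<Sum>i<length Fs. (bs ! i) v)) \<Longrightarrow> ser_prod Fs \<alpha> > 0"
proof (induction Fs arbitrary: \<alpha> bs)
  case Nil
  then have "\<alpha> = (\<lambda>v. 0)" by auto
  then show ?case by (simp add: ser_prod_Nil ser_one_def)
next
  case (Cons F Fs)
  obtain \<beta> bs' where bs: "bs = \<beta> # bs'" using Cons.prems(2) by (cases bs) auto
  have len: "length bs' = length Fs" using Cons.prems(2) bs by simp
  have av: "\<alpha> v = \<beta> v + (\<Sum>i<length Fs. (bs' ! i) v)" for v
  proof -
    have "\<alpha> v = (\<Sum>i<length (F # Fs). ((\<beta> # bs') ! i) v)" using Cons.prems(5)[rule_format, of v] bs by (simp only:)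
    also have "\<dots> = \<beta> v + (\<Sum>i<length Fs. (bs' ! i) v)"
      by (simp only: length_Cons sum.lessThan_Suc_shift nth_Cons_0 nth_Cons_Suc)
    finally show ?thesis .
  qed
  let ?\<alpha>' = "\<lambda>v. \<alpha> v - \<beta> v"
  have a': "\<forall>v. ?\<alpha>' v = (\<Sum>i<length Fs. (bs' ! i) v)" using av by simp
  have fin': "finite {v. ?\<alpha>' v \<noteq> 0}"
    by (rule finite_subset[OF _ Cons.prems(4)]) auto
  have pos': "\<forall>i<length Fs. (Fs ! i) (bs' ! i) > 0" using Cons.prems(3) bs by auto
  have G: "ser_prod Fs ?\<alpha>' > 0"
    by (rule Cons.IH[OF _ len pos' fin' a']) (use Cons.prems(1) in auto)
  have Fb: "F \<beta> > 0" using Cons.prems(3) bs by auto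
  let ?A = "{\<gamma>::mono. \<forall>v. \<gamma> v \<le> \<alpha> v}"
  have finA: "finite ?A" by (rule finite_le_set[OF Cons.prems(4)])
  have bA: "\<beta> \<in> ?A" using av by auto
  have nn: "\<And>\<gamma>. F \<gamma> * ser_prod Fs (\<lambda>v. \<alpha> v - \<gamma> v) \<ge> 0"
    using Cons.prems(1) ser_prod_nonneg[of Fs] by (intro mult_nonneg_nonneg) auto
  have "F \<beta> * ser_prod Fs ?\<alpha>' \<le> (\<Sum>\<gamma>\<in>?A. F \<gamma> * ser_prod Fs (\<lambda>v. \<alpha> v - \<gamma> v))"
    by (rule member_le_sum[OF bA]) (use nn finA in auto)
  moreover have "F \<beta> * ser_prod Fs ?\<alpha>' > 0" using Fb G by simp
  ultimately show ?case unfolding ser_prod_Cons ser_mult_def by linarith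
qed

lemma W_superset: "finite U \<Longrightarrow> {v. \<alpha> v \<noteq> 0} \<subseteq> U \<Longrightarrow> W \<alpha> = (\<Sum>v\<in>U. (\<alpha> v)^2)"
  unfolding W_def by (rule sum.mono_neutral_left) auto

lemma sum_ind_card: "finite A \<Longrightarrow> (\<Sum>i\<in>A. if Q i then 1 else (0::nat)) = card {i\<in>A. Q i}"
  by (simp add: sum.If_cases Int_def conj_commute)

lemma W_ind:
  assumes I: "finite I" and D: "\<And>i. i \<in> I \<Longrightarrow> finite (D i)" and a: "\<And>v. \<alpha> v = (\<Sum>i\<in>I. ind (D i) v)"
  shows "W \<alpha> = (\<Sum>i\<in>I. \<Sum>i'\<in>I. card (D i \<inter> D i'))"
proof -
  let ?U = "\<Union>i\<in>I. D i"
  have U: "finite ?U" using I D by auto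
  have sub: "{v. \<alpha> v \<noteq> 0} \<subseteq> ?U"
  proof
    fix v assume "v \<in> {v. \<alpha> v \<noteq> 0}"
    then have "(\<Sum>i\<in>I. ind (D i) v) \<noteq> 0" using a by simp
    then obtain i where "i \<in> I" "ind (D i) v \<noteq> 0" using sum.not_neutral_contains_not_neutral by blast
    then show "v \<in> ?U" by (auto simp: ind_def split: if_splits)
  qed
  have "W \<alpha> = (\<Sum>v\<in>?U. (\<alpha> v)^2)" by (rule W_superset[OF U sub])
  also have "\<dots> = (\<Sum>v\<in>?U. \<Sum>i\<in>I. \<Sum>i'\<in>I. ind (D i) v * ind (D i') v)"
    by (simp add: a power2_eq_square sum_product)
  also have "\<dots> = (\<Sum>i\<in>I. \<Sum>i'\<in>I. \<Sum>v\<in>?U. ind (D i) v * ind (D i') v)"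
    by (subst sum.swap, subst (2) sum.swap, rule refl)
  also have "\<dots> = (\<Sum>i\<in>I. \<Sum>i'\<in>I. card (D i \<inter> D i'))"
  proof (intro sum.cong refl)
    fix i i' assume ii: "i \<in> I" "i' \<in> I"
    have "(\<Sum>v\<in>?U. ind (D i) v * ind (D i') v) = (\<Sum>v\<in>?U. if v \<in> D i \<inter> D i' then 1 else 0)"
      by (intro sum.cong refl) (simp add: ind_def)
    also have "\<dots> = card {v\<in>?U. v \<in> D i \<inter> D i'}" by (rule sum_ind_card[OF U])
    also have "{v\<in>?U. v \<in> D i \<inter> D i'} = D i \<inter> D i'" using ii by auto
    finally show "(\<Sum>v\<in>?U. ind (D i) v * ind (D i') v) = card (D i \<inter> D i')" .
  qed
  finally show ?thesis .
qed

lemma mdeg_ind: "finite D \<Longrightarrow> mdeg (ind D) = card D"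
proof -
  assume "finite D"
  have "{v. ind D v \<noteq> 0} = D" by (auto simp: ind_def)
  then show ?thesis unfolding mdeg_def by (simp add: ind_def)
qed

lemma sum_eq_le_imp_eq:
  fixes f g :: "'b \<Rightarrow> nat"
  assumes "finite A" "\<forall>x\<in>A. f x \<le> g x" "sum f A = sum g A"
  shows "\<forall>x\<in>A. f x = g x"
proof (rule ccontr)
  assume "\<not> (\<forall>x\<in>A. f x = g x)"
  then obtain a where "a \<in> A" "f a < g a" using assms(2) by (meson le_neq_implies_less)
  then have "sum f A < sum g A" using assms by (intro sum_strict_mono_ex1) auto
  then show False using assms(3) by simp
qed

lemma card_inter_min:
  assumes "finite A" "finite B" "card (A \<inter> B) = min (card A) (card B)"
  shows "A \<subseteq> B \<or> B \<subseteq> A"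
proof (cases "card A \<le> card B")
  case True
  then have "card (A \<inter> B) = card A" using assms(3) by simp
  then have "A \<inter> B = A" by (intro card_subset_eq) (use assms in auto)
  then show ?thesis by blast
next
  case False
  then have "card (A \<inter> B) = card B" using assms(3) by simp
  then have "A \<inter> B = B" by (intro card_subset_eq) (use assms in auto)
  then show ?thesis by blast
qed

lemma cnt_shift: "v \<ge> 1 \<Longrightarrow> cnt l (v - 1) = cnt l v + count (mset l) v"
  by (induction l) auto

lemma partition_eq:
  assumes "sorted_wrt (\<ge>) l" "sorted_wrt (\<ge>) l'" "0 \<notin> set l" "0 \<notin> set l'"
    "\<And>p. cnt l p = cnt l' p"
  shows "l = l'"
proof -
  have "count (mset l) v = count (mset l') v" for v
  proof (cases "v = 0")
    case True then show ?thesis using assms(3,4) by (metis count_eq_zero_iff set_mset_mset)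
  next
    case False
    then show ?thesis using cnt_shift[of v l] cnt_shift[of v l'] assms(5)[of "v - 1"] assms(5)[of v] by simp
  qed
  then have m: "mset (rev l) = mset (rev l')" by (simp add: multiset_eqI)
  have s: "sorted (rev l)" "sorted (rev l')" using assms(1,2) by (simp_all add: sorted_wrt_rev)
  have "sort (rev l') = rev l" by (rule properties_for_sort[OF m s(1)])
  moreover have "sort (rev l') = rev l'" by (rule sorted_sort_id[OF s(2)])
  ultimately show ?thesis by simp
qed

lemma cnt_mono: "q \<le> p \<Longrightarrow> cnt l p \<le> cnt l q"
  by (induction l) auto

lemma down_set:
  assumes "finite P" "\<And>p q. p \<in> P \<Longrightarrow> q < p \<Longrightarrow> q \<in> P"
  shows "P = {..<card P}"
proof (cases "P = {}")
  case True then show ?thesis by simp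
next
  case False
  let ?M = "Max P"
  have M: "?M \<in> P" using assms(1) False by simp
  have "P = {..?M}"
  proof
    show "P \<subseteq> {..?M}" using assms(1) by auto
    show "{..?M} \<subseteq> P" using M assms(2) by (auto simp: le_less)
  qed
  then have "P = {..<Suc ?M}" by (simp add: lessThan_Suc_atMost)
  then show ?thesis by (metis card_lessThan)
qed

lemma filter_rws_aux:
  "distinct ks \<Longrightarrow> length (filter (\<lambda>x. fst x = k \<and> P (snd x)) (concat (map (\<lambda>k'. map (Pair k') (f k')) ks)))
     = (if k \<in> set ks then length (filter P (f k)) else 0)"
proof (induction ks)
  case Nil then show ?case by simp
next
  case (Cons k' ks)
  have "filter (\<lambda>x. fst x = k \<and> P (snd x)) (map (Pair k') (f k')) =
        (if k' = k then map (Pair k') (filter P (f k')) else [])"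
    by (auto simp: filter_map comp_def)
  then show ?case using Cons by auto
qed

lemma R1:
  assumes "k \<in> {1..r}"
  shows "card {i. i < length (rws r lam) \<and> fst (rws r lam ! i) = k \<and> P (snd (rws r lam ! i))}
         = length (filter P (lam k))"
proof -
  have "card {i. i < length (rws r lam) \<and> fst (rws r lam ! i) = k \<and> P (snd (rws r lam ! i))}
      = length (filter (\<lambda>x. fst x = k \<and> P (snd x)) (rws r lam))"
    by (simp add: length_filter_conv_card)
  also have "\<dots> = length (filter P (lam k))"
  proof -
    have d: "distinct [1..<r+1]" by simp
    have m: "k \<in> set [1..<r+1]" using assms by auto
    have e: "length (filter (\<lambda>x. fst x = k \<and> P (snd x)) (concat (map (\<lambda>k'. map (Pair k') (lam k')) [1..<r+1])))
     = (if k \<in> set [1..<r+1] then length (filter P (lam k)) else 0)" by (rule filter_rws_aux[OF d])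
    show ?thesis unfolding rws_def e using m by (simp only: if_True)
  qed
  finally show ?thesis .
qed

definition Cset :: "(nat \<Rightarrow> nat) \<Rightarrow> nat \<times> nat \<Rightarrow> (nat \<times> nat) set" where
  "Cset \<phi> x = (\<lambda>p. (\<phi> (fst x), p)) ` {..<snd x}"

definition gam :: "nat \<Rightarrow> (nat \<Rightarrow> nat) \<Rightarrow> (nat \<Rightarrow> nat list) \<Rightarrow> mono" where
  "gam r \<phi> \<nu> = (\<lambda>v. \<Sum>i<length (rws r \<nu>). ind (Cset \<phi> (rws r \<nu> ! i)) v)"

definition Eprod :: "nat \<Rightarrow> (nat \<Rightarrow> nat) \<Rightarrow> (nat \<Rightarrow> nat list) \<Rightarrow> mono \<Rightarrow> rat" where
  "Eprod r \<phi> lam = ser_prod (map (\<lambda>(k, s). e_ser (\<phi> k) s) (rws r lam))"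

lemma finite_Cset[simp]: "finite (Cset \<phi> x)" by (simp add: Cset_def)

lemma card_Cset: "card (Cset \<phi> x) = snd x"
  unfolding Cset_def by (subst card_image) (auto simp: inj_on_def)

lemma Cset_inter: "card (Cset \<phi> x \<inter> Cset \<phi> y) = (if \<phi> (fst x) = \<phi> (fst y) then min (snd x) (snd y) else 0)"
proof (cases "\<phi> (fst x) = \<phi> (fst y)")
  case True
  then have "Cset \<phi> x \<inter> Cset \<phi> y = (\<lambda>p. (\<phi> (fst x), p)) ` {..<min (snd x) (snd y)}"
    unfolding Cset_def by auto
  then show ?thesis using True by (simp add: card_image inj_on_def)
next
  case False
  then have "Cset \<phi> x \<inter> Cset \<phi> y = {}" unfolding Cset_def by auto
  then show ?thesis using False by simp
qed

lemma e_ind: "e_ser (\<phi> k) s (ind (Cset \<phi> (k, s))) = (1::'a::comm_ring_1)"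
proof -
  have fin: "finite {v. ind (Cset \<phi> (k, s)) v \<noteq> 0}" by (simp add: ind_def)
  have "in_fam (\<phi> k) (ind (Cset \<phi> (k, s)))" unfolding in_fam_def using fin by (auto simp: ind_def Cset_def)
  moreover have "\<forall>v. ind (Cset \<phi> (k, s)) v \<le> 1" by (simp add: ind_def)
  moreover have "mdeg (ind (Cset \<phi> (k, s))) = s" by (simp add: mdeg_ind card_Cset)
  ultimately show ?thesis unfolding e_ser_def by simp
qed

lemma E1: "Eprod r \<phi> lam (gam r \<phi> lam) > 0"
proof -
  let ?xs = "rws r lam"
  let ?Fs = "map (\<lambda>(k, s). e_ser (\<phi> k) s) ?xs :: (mono \<Rightarrow> rat) list"
  let ?bs = "map (\<lambda>x. ind (Cset \<phi> x)) ?xs"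
  have fin: "finite {v. gam r \<phi> lam v \<noteq> 0}"
  proof (rule finite_subset)
    show "{v. gam r \<phi> lam v \<noteq> 0} \<subseteq> (\<Union>i<length ?xs. Cset \<phi> (?xs ! i))"
    proof
      fix v assume "v \<in> {v. gam r \<phi> lam v \<noteq> 0}"
      then obtain i where "i < length ?xs" "ind (Cset \<phi> (?xs ! i)) v \<noteq> 0"
        unfolding gam_def by (auto dest: sum.not_neutral_contains_not_neutral)
      then show "v \<in> (\<Union>i<length ?xs. Cset \<phi> (?xs ! i))" by (auto simp: ind_def split: if_splits)
    qed
  qed simp
  have "ser_prod ?Fs (gam r \<phi> lam) > 0"
  proof (rule ser_prod_pos_tuple[of ?Fs ?bs])
    show "\<And>F \<beta>. F \<in> set ?Fs \<Longrightarrow> 0 \<le> F \<beta>" by (auto simp: e_ser_def)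
    show "length ?bs = length ?Fs" by simp
    show "\<forall>i<length ?Fs. 0 < (?Fs ! i) (?bs ! i)"
    proof (intro allI impI)
      fix i assume "i < length ?Fs"
      then have "(?Fs ! i) (?bs ! i) = e_ser (\<phi> (fst (?xs ! i))) (snd (?xs ! i)) (ind (Cset \<phi> (fst (?xs ! i), snd (?xs ! i))))"
        by (simp add: case_prod_unfold)
      also have "\<dots> = 1" by (rule e_ind)
      finally show "0 < (?Fs ! i) (?bs ! i)" by simp
    qed
    show "finite {v. gam r \<phi> lam v \<noteq> 0}" by (rule fin)
    show "\<forall>v. gam r \<phi> lam v = (\<Sum>i<length ?Fs. (?bs ! i) v)" by (simp add: gam_def)
  qed
  then show ?thesis unfolding Eprod_def .
qed

lemma W_gam: "W (gam r \<phi> lam) = (\<Sum>i<length (rws r lam). \<Sum>i'<length (rws r lam).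
    card (Cset \<phi> (rws r lam ! i) \<inter> Cset \<phi> (rws r lam ! i')))"
  by (rule W_ind) (auto simp: gam_def)

lemma E23:
  fixes \<phi> :: "nat \<Rightarrow> nat"
  assumes nz: "Eprod r \<phi> lam (gam r \<phi> \<nu>) \<noteq> 0"
  shows "W (gam r \<phi> \<nu>) \<le> W (gam r \<phi> lam)"
    and "inj_on \<phi> {1..r} \<Longrightarrow> lam \<in> multipart r n \<Longrightarrow> \<nu> \<in> multipart r n' \<Longrightarrow>
         W (gam r \<phi> \<nu>) = W (gam r \<phi> lam) \<Longrightarrow> \<nu> = lam"
proof -
  let ?xs = "rws r lam"
  let ?l = "length ?xs"
  let ?Fs = "map (\<lambda>(k, s). e_ser (\<phi> k) s) ?xs :: (mono \<Rightarrow> rat) list"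
  obtain bs where bs: "length bs = length ?Fs" "\<forall>i<length ?Fs. (?Fs ! i) (bs ! i) \<noteq> 0"
    "\<forall>v. gam r \<phi> \<nu> v = (\<Sum>i<length ?Fs. (bs ! i) v)"
    using ser_prod_nz_tuple[OF nz[unfolded Eprod_def]] by blast
  define D where "D i = {v. (bs ! i) v \<noteq> 0}" for i
  define C where "C i = Cset \<phi> (?xs ! i)" for i
  have eb: "e_ser (\<phi> (fst (?xs ! i))) (snd (?xs ! i)) (bs ! i) \<noteq> (0::rat)" if "i < ?l" for i
    using bs(2) that by (auto simp: case_prod_unfold)
  have Dp: "finite (D i) \<and> D i \<subseteq> {v. fst v = \<phi> (fst (?xs ! i))} \<and> card (D i) = snd (?xs ! i)
      \<and> bs ! i = ind (D i)" if i: "i < ?l" for i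
  proof -
    have h: "in_fam (\<phi> (fst (?xs ! i))) (bs ! i)" "\<forall>v. (bs ! i) v \<le> 1" "mdeg (bs ! i) = snd (?xs ! i)"
      using eb[OF i] unfolding e_ser_def by (auto split: if_splits)
    have f: "finite (D i)" using h(1) unfolding in_fam_def D_def by simp
    have s: "D i \<subseteq> {v. fst v = \<phi> (fst (?xs ! i))}" using h(1) unfolding in_fam_def D_def by auto
    have e: "bs ! i = ind (D i)"
    proof
      fix v show "(bs ! i) v = ind (D i) v" using h(2)[rule_format, of v] by (auto simp: ind_def D_def)
    qed
    have "card (D i) = snd (?xs ! i)" using h(3) e mdeg_ind[OF f] by simp
    then show ?thesis using f s e by simp
  qed
  have gnu: "gam r \<phi> \<nu> v = (\<Sum>i<?l. ind (D i) v)" for v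
  proof -
    have "gam r \<phi> \<nu> v = (\<Sum>i<?l. (bs ! i) v)" using bs(3)[rule_format, of v] by simp
    also have "\<dots> = (\<Sum>i<?l. ind (D i) v)" using Dp by (intro sum.cong refl) auto
    finally show ?thesis .
  qed
  have Wnu: "W (gam r \<phi> \<nu>) = (\<Sum>i<?l. \<Sum>i'<?l. card (D i \<inter> D i'))"
    by (rule W_ind) (use Dp gnu in auto)
  have Wlam: "W (gam r \<phi> lam) = (\<Sum>i<?l. \<Sum>i'<?l. card (C i \<inter> C i'))"
    unfolding C_def by (rule W_gam)
  have le: "card (D i \<inter> D i') \<le> card (C i \<inter> C i')" if "i < ?l" "i' < ?l" for i i'
  proof (cases "\<phi> (fst (?xs ! i)) = \<phi> (fst (?xs ! i'))")
    case True
    have "card (D i \<inter> D i') \<le> card (D i)" using Dp[OF that(1)] by (intro card_mono) auto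
    moreover have "card (D i \<inter> D i') \<le> card (D i')" using Dp[OF that(2)] by (intro card_mono) auto
    ultimately show ?thesis using True Dp[OF that(1)] Dp[OF that(2)] by (simp add: C_def Cset_inter)
  next
    case False
    have s1: "D i \<subseteq> {v. fst v = \<phi> (fst (?xs ! i))}" using Dp[OF that(1)] by simp
    have s2: "D i' \<subseteq> {v. fst v = \<phi> (fst (?xs ! i'))}" using Dp[OF that(2)] by simp
    have "v \<notin> D i \<or> v \<notin> D i'" for v
    proof (rule ccontr)
      assume "\<not> (v \<notin> D i \<or> v \<notin> D i')"
      then have "fst v = \<phi> (fst (?xs ! i))" "fst v = \<phi> (fst (?xs ! i'))" using s1 s2 by auto
      then show False using False by simp
    qed
    then have "D i \<inter> D i' = {}" by blast
    then show ?thesis by simp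
  qed
  show W1: "W (gam r \<phi> \<nu>) \<le> W (gam r \<phi> lam)"
    unfolding Wnu Wlam by (intro sum_mono) (use le in auto)
  assume inj: "inj_on \<phi> {1..r}" and mlam: "lam \<in> multipart r n" and mnu: "\<nu> \<in> multipart r n'"
    and eqW: "W (gam r \<phi> \<nu>) = W (gam r \<phi> lam)"
  have alleq: "card (D i \<inter> D i') = card (C i \<inter> C i')" if "i < ?l" "i' < ?l" for i i'
  proof -
    have o: "\<forall>i\<in>{..<?l}. (\<Sum>i'<?l. card (D i \<inter> D i')) = (\<Sum>i'<?l. card (C i \<inter> C i'))"
      by (rule sum_eq_le_imp_eq) (use le eqW Wnu Wlam in \<open>auto intro: sum_mono\<close>)
    have "\<forall>i'\<in>{..<?l}. card (D i \<inter> D i') = card (C i \<inter> C i')"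
      by (rule sum_eq_le_imp_eq) (use le o that in auto)
    then show ?thesis using that by auto
  qed
  have nested: "D i \<subseteq> D i' \<or> D i' \<subseteq> D i"
    if "i < ?l" "i' < ?l" "\<phi> (fst (?xs ! i)) = \<phi> (fst (?xs ! i'))" for i i'
  proof (rule card_inter_min)
    show "finite (D i)" "finite (D i')" using Dp that by auto
    show "card (D i \<inter> D i') = min (card (D i)) (card (D i'))"
      using alleq[OF that(1,2)] that(3) Dp[OF that(1)] Dp[OF that(2)] by (simp add: C_def Cset_inter)
  qed
  have kin: "fst (rws r \<mu> ! i) \<in> {1..r}" if "i < length (rws r \<mu>)" for \<mu> i
    using rws_set[of "fst (rws r \<mu> ! i)" "snd (rws r \<mu> ! i)" r \<mu>] nth_mem[OF that] by simp
  show "\<nu> = lam"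
  proof
    fix k
    show "\<nu> k = lam k"
    proof (cases "k \<in> {1..r}")
      case False then show ?thesis using mlam mnu unfolding multipart_def by auto
    next
      case k: True
      define j where "j = \<phi> k"
      have fam_iff: "\<phi> (fst (rws r \<mu> ! i)) = j \<longleftrightarrow> fst (rws r \<mu> ! i) = k" if "i < length (rws r \<mu>)" for \<mu> i
        using inj kin[OF that] k unfolding j_def by (meson inj_on_contraD)
      define P where "P i = {p. (j, p) \<in> D i}" for i
      have Dj: "D i = (\<lambda>p. (j, p)) ` P i" if "i < ?l" "fst (?xs ! i) = k" for i
        using Dp[OF that(1)] that(2) unfolding P_def j_def by auto
      have finP: "finite (P i)" and cardP: "card (P i) = snd (?xs ! i)" if "i < ?l" "fst (?xs ! i) = k" for i
      proof -
        have "inj_on (\<lambda>p. (j, p)) (P i)" by (simp add: inj_on_def)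
        then have "card (D i) = card (P i)" using Dj[OF that] by (simp add: card_image)
        then show "card (P i) = snd (?xs ! i)" using Dp[OF that(1)] by simp
        show "finite (P i)" using Dp[OF that(1)] Dj[OF that] by (simp add: finite_image_iff inj_on_def)
      qed
      have Pnest: "P i \<subseteq> P i' \<or> P i' \<subseteq> P i"
        if "i < ?l" "i' < ?l" "fst (?xs ! i) = k" "fst (?xs ! i') = k" for i i'
        using nested[OF that(1,2)] that(3,4) unfolding P_def by auto
      define c where "c p = gam r \<phi> \<nu> (j, p)" for p
      have cD: "c p = card {i. i < ?l \<and> fst (?xs ! i) = k \<and> p \<in> P i}" for p
      proof -
        have "c p = (\<Sum>i<?l. if (j, p) \<in> D i then 1 else 0)" unfolding c_def gnu by (simp add: ind_def)
        also have "\<dots> = card {i\<in>{..<?l}. (j, p) \<in> D i}" by (rule sum_ind_card) simp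
        also have "{i\<in>{..<?l}. (j, p) \<in> D i} = {i. i < ?l \<and> fst (?xs ! i) = k \<and> p \<in> P i}"
        proof (intro Set.set_eqI iffI)
          fix i assume "i \<in> {i\<in>{..<?l}. (j, p) \<in> D i}"
          then have i: "i < ?l" "(j, p) \<in> D i" by auto
          then have "\<phi> (fst (?xs ! i)) = j" using Dp[OF i(1)] by auto
          then show "i \<in> {i. i < ?l \<and> fst (?xs ! i) = k \<and> p \<in> P i}" using fam_iff[OF i(1)] i P_def by auto
        qed (auto simp: P_def)
        finally show ?thesis .
      qed
      have cnu: "c p = cnt (\<nu> k) p" for p
      proof -
        let ?ys = "rws r \<nu>"
        have "c p = (\<Sum>i<length ?ys. if (j, p) \<in> Cset \<phi> (?ys ! i) then 1 else 0)"
          unfolding c_def gam_def by (simp add: ind_def)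
        also have "\<dots> = card {i\<in>{..<length ?ys}. (j, p) \<in> Cset \<phi> (?ys ! i)}" by (rule sum_ind_card) simp
        also have "{i\<in>{..<length ?ys}. (j, p) \<in> Cset \<phi> (?ys ! i)} = {i. i < length ?ys \<and> fst (?ys ! i) = k \<and> p < snd (?ys ! i)}"
          using fam_iff unfolding Cset_def by auto
        also have "card \<dots> = cnt (\<nu> k) p" by (rule R1[OF k])
        finally show ?thesis .
      qed
      have cmono: "q \<le> p \<Longrightarrow> c p \<le> c q" for p q unfolding cnu by (rule cnt_mono)
      have downs: "q \<in> P i" if i: "i < ?l" "fst (?xs ! i) = k" and p: "p \<in> P i" and q: "q < p" for i p q
      proof (rule ccontr)
        assume nq: "q \<notin> P i"
        let ?A = "\<lambda>x. {i. i < ?l \<and> fst (?xs ! i) = k \<and> x \<in> P i}"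
        have sub: "?A q \<subseteq> ?A p - {i}"
        proof
          fix i' assume "i' \<in> ?A q"
          then have i': "i' < ?l" "fst (?xs ! i') = k" "q \<in> P i'" by auto
          have "i' \<noteq> i" using nq i' by auto
          moreover have "P i \<subseteq> P i'" using Pnest[OF i(1) i'(1) i(2) i'(2)] nq i'(3) by auto
          ultimately show "i' \<in> ?A p - {i}" using i' p by auto
        qed
        have fA: "finite (?A p)" by simp
        have "card (?A q) \<le> card (?A p - {i})" by (rule card_mono) (use fA sub in auto)
        also have "\<dots> < card (?A p)" using i p fA by (intro card_Diff1_less) auto
        finally have "card (?A q) < card (?A p)" .
        then have "c q < c p" unfolding cD .
        then show False using cmono[of q p] q by simp
      qed
      have Peq: "P i = {..<snd (?xs ! i)}" if i: "i < ?l" "fst (?xs ! i) = k" for i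
        using down_set[OF finP[OF i]] downs[OF i] cardP[OF i] by metis
      have clam: "c p = cnt (lam k) p" for p
      proof -
        have "c p = card {i. i < ?l \<and> fst (?xs ! i) = k \<and> p < snd (?xs ! i)}"
          unfolding cD using Peq by (intro arg_cong[where f=card]) auto
        also have "\<dots> = cnt (lam k) p" by (rule R1[OF k])
        finally show ?thesis .
      qed
      show "\<nu> k = lam k"
        by (rule partition_eq) (use mlam mnu cnu clam in \<open>auto simp: multipart_def\<close>)
    qed
  qed
qed

lemma row_sum: "A \<in> carrier_mat N N \<Longrightarrow> j < N \<Longrightarrow> (A *\<^sub>v vec N x) $ j = (\<Sum>k<N. A $$ (j, k) * x k)"
  by (simp add: scalar_prod_def atLeast0LessThan)

lemma row_sum': "A \<in> carrier_mat N N \<Longrightarrow> j < N \<Longrightarrow> row A j \<bullet> vec N x = (\<Sum>k<N. A $$ (j, k) * x k)"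
  by (simp add: scalar_prod_def atLeast0LessThan)

lemma LA_indep:
  fixes A :: "'a::field mat"
  assumes A: "A \<in> carrier_mat N N" and d: "det A \<noteq> 0" and s: "\<forall>j<N. (\<Sum>k<N. A $$ (j, k) * x k) = 0"
  shows "\<forall>k<N. x k = 0"
proof -
  have "A *\<^sub>v vec N x = 0\<^sub>v N" by (rule eq_vecI) (use A s in \<open>auto simp: row_sum'\<close>)
  moreover have "vec N x \<in> carrier_vec N" by simp
  ultimately have "vec N x = 0\<^sub>v N" using det_0_iff_vec_prod_zero_field[OF A] d by blast
  then show ?thesis by (metis index_vec index_zero_vec(1))
qed

lemma LA_dep:
  fixes A :: "'a::field mat"
  assumes A: "A \<in> carrier_mat N N" and d: "det A = 0"
  shows "\<exists>x. (\<exists>k<N. x k \<noteq> 0) \<and> (\<forall>j<N. (\<Sum>k<N. A $$ (j, k) * x k) = 0)"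
proof -
  obtain v where v: "v \<in> carrier_vec N" "v \<noteq> 0\<^sub>v N" "A *\<^sub>v v = 0\<^sub>v N"
    using det_0_iff_vec_prod_zero_field[OF A] d by blast
  have vv: "v = vec N (\<lambda>k. v $ k)" using v(1) by (intro eq_vecI) auto
  have "\<exists>k<N. v $ k \<noteq> 0"
  proof (rule ccontr)
    assume "\<not> (\<exists>k<N. v $ k \<noteq> 0)"
    then have "v = 0\<^sub>v N" using v(1) by (intro eq_vecI) auto
    then show False using v(2) by simp
  qed
  moreover have "\<forall>j<N. (\<Sum>k<N. A $$ (j, k) * v $ k) = 0"
  proof (intro allI impI)
    fix j assume j: "j < N"
    have "(A *\<^sub>v vec N (\<lambda>k. v $ k)) $ j = 0" using v(3) vv j by simp
    then show "(\<Sum>k<N. A $$ (j, k) * v $ k) = 0" using row_sum[OF A j] by simp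
  qed
  ultimately show ?thesis by blast
qed

lemma det_Qt:
  assumes A: "A \<in> carrier_mat n n" and e: "\<And>i j. i < n \<Longrightarrow> j < n \<Longrightarrow> A $$ (i, j) \<in> Qt r"
  shows "det A \<in> Qt r"
  unfolding det_def'[OF A]
proof (intro Qt_sum Qt_mult Qt_of_int Qt_prod)
  fix p i assume "p \<in> {p. p permutes {0..<n}}" "i \<in> {0..<n}"
  then show "A $$ (i, p i) \<in> Qt r" using e permutes_in_image by fastforce
qed

lemma adj_Qt:
  assumes A: "A \<in> carrier_mat n n" and e: "\<And>i j. i < n \<Longrightarrow> j < n \<Longrightarrow> A $$ (i, j) \<in> Qt r"
    and ij: "i < n" "j < n"
  shows "adj_mat A $$ (i, j) \<in> Qt r"
proof -
  have "adj_mat A $$ (i, j) = (- 1) ^ (j + i) * det (mat_delete A j i)"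
    using A ij by (simp add: adj_mat_def cofactor_def)
  moreover have "det (mat_delete A j i) \<in> Qt r"
  proof (rule det_Qt)
    show "mat_delete A j i \<in> carrier_mat (n - 1) (n - 1)" using A by (simp add: mat_delete_def)
    fix i' j' assume "i' < n - 1" "j' < n - 1"
    then show "mat_delete A j i $$ (i', j') \<in> Qt r" using A e by (simp add: mat_delete_def)
  qed
  ultimately show ?thesis by (simp add: Qt_mult Qt_power Qt_uminus)
qed

lemma LA_span:
  fixes A :: "ratfun mat"
  assumes A: "A \<in> carrier_mat N N" and d: "det A \<noteq> 0"
    and e: "\<And>i j. i < N \<Longrightarrow> j < N \<Longrightarrow> A $$ (i, j) \<in> Qt r" and w: "\<And>j. j < N \<Longrightarrow> w j \<in> Qt r"
  shows "\<exists>x. (\<forall>k<N. x k \<in> Qt r) \<and> (\<forall>j<N. (\<Sum>k<N. A $$ (j, k) * x k) = w j)"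
proof -
  let ?B = "adj_mat A"
  have B: "?B \<in> carrier_mat N N" and AB: "A * ?B = det A \<cdot>\<^sub>m 1\<^sub>m N" using adj_mat[OF A] by auto
  define x where "x k = inverse (det A) * (\<Sum>l<N. ?B $$ (k, l) * w l)" for k
  have ABe: "(\<Sum>k<N. A $$ (j, k) * ?B $$ (k, l)) = (if j = l then det A else 0)" if "j < N" "l < N" for j l
  proof -
    have "(A * ?B) $$ (j, l) = (\<Sum>k<N. A $$ (j, k) * ?B $$ (k, l))"
      using A B that by (simp add: scalar_prod_def atLeast0LessThan)
    moreover have "(A * ?B) $$ (j, l) = det A * (if j = l then 1 else 0)" using AB that by simp
    ultimately show ?thesis by (cases "j = l") simp_all
  qed
  have "(\<Sum>k<N. A $$ (j, k) * x k) = w j" if j: "j < N" for j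
  proof -
    have "(\<Sum>k<N. A $$ (j, k) * x k) = (\<Sum>k<N. inverse (det A) * (\<Sum>l<N. A $$ (j, k) * (?B $$ (k, l) * w l)))"
      unfolding x_def by (intro sum.cong refl) (simp only: sum_distrib_left mult.left_commute)
    also have "\<dots> = inverse (det A) * (\<Sum>k<N. \<Sum>l<N. A $$ (j, k) * (?B $$ (k, l) * w l))"
      by (simp only: sum_distrib_left)
    also have "\<dots> = inverse (det A) * (\<Sum>l<N. \<Sum>k<N. A $$ (j, k) * (?B $$ (k, l) * w l))"
      by (subst sum.swap) (rule refl)
    also have "\<dots> = inverse (det A) * (\<Sum>l<N. (\<Sum>k<N. A $$ (j, k) * ?B $$ (k, l)) * w l)"
      by (simp only: sum_distrib_right mult.assoc)
    also have "\<dots> = inverse (det A) * (\<Sum>l<N. (if j = l then det A * w l else 0))"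
      using ABe j by (intro arg_cong[where f="(*) _"] sum.cong refl) auto
    also have "\<dots> = w j" using j d by simp
    finally show ?thesis .
  qed
  moreover have "x k \<in> Qt r" if "k < N" for k
    unfolding x_def
    by (intro Qt_mult Qt_inverse Qt_sum det_Qt[OF A e] adj_Qt[OF A e] w that) auto
  ultimately show ?thesis by blast
qed

lemma length_le_sum_list: "0 \<notin> set xs \<Longrightarrow> length xs \<le> sum_list (xs :: nat list)"
  by (induction xs) auto

lemma finite_multipart: "finite (multipart r n)"
proof -
  let ?S = "{xs. set xs \<subseteq> {0..n} \<and> length xs \<le> n}"
  have "multipart r n \<subseteq> {f. \<forall>x. (x \<in> {1..r} \<longrightarrow> f x \<in> ?S) \<and> (x \<notin> {1..r} \<longrightarrow> f x = [])}"
  proof (rule subsetI)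
    fix lam assume m: "lam \<in> multipart r n"
    have "lam k \<in> ?S" if k: "k \<in> {1..r}" for k
    proof -
      have "sum_list (lam k) \<le> (\<Sum>k=1..r. sum_list (lam k))" by (rule member_le_sum) (use k in auto)
      then have sl: "sum_list (lam k) \<le> n" using m unfolding multipart_def by simp
      have "x \<le> sum_list (lam k)" if "x \<in> set (lam k)" for x by (rule member_le_sum_list[OF that]) simp
      moreover have "length (lam k) \<le> sum_list (lam k)" using m length_le_sum_list unfolding multipart_def by blast
      ultimately show ?thesis using sl by force
    qed
    then show "lam \<in> {f. \<forall>x. (x \<in> {1..r} \<longrightarrow> f x \<in> ?S) \<and> (x \<notin> {1..r} \<longrightarrow> f x = [])}"
      using m unfolding multipart_def by blast
  qed
  moreover have "finite {f. \<forall>x. (x \<in> {1..r} \<longrightarrow> f x \<in> ?S) \<and> (x \<notin> {1..r} \<longrightarrow> f x = [])}"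
    by (rule finite_set_of_finite_funs) (auto intro: finite_lists_length_le)
  ultimately show ?thesis by (rule finite_subset)
qed

definition idx :: "'a list \<Rightarrow> 'a \<Rightarrow> nat" where "idx L x = (THE i. i < length L \<and> L ! i = x)"

lemma idx_nth: "distinct L \<Longrightarrow> i < length L \<Longrightarrow> idx L (L ! i) = i"
  unfolding idx_def by (rule the_equality) (auto simp: nth_eq_iff_index_eq)

lemma idx_in: "distinct L \<Longrightarrow> x \<in> set L \<Longrightarrow> idx L x < length L \<and> L ! idx L x = x"
  by (metis idx_nth in_set_conv_nth)

lemma sum_list_idx: "distinct L \<Longrightarrow> (\<Sum>x\<in>set L. f x) = (\<Sum>i<length L. f (L ! i))"
proof -
  assume d: "distinct L"
  have "set L = (\<lambda>i. L ! i) ` {..<length L}" by (auto simp: in_set_conv_nth)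
  moreover have "inj_on (\<lambda>i. L ! i) {..<length L}" using d by (simp add: inj_on_def nth_eq_iff_index_eq)
  ultimately show ?thesis by (simp add: sum.reindex)
qed

lemma symm_comb: "(\<And>lam. lam \<in> I \<Longrightarrow> symm (b lam)) \<Longrightarrow> symm (\<lambda>\<alpha>. \<Sum>lam\<in>I. c lam * b lam \<alpha>)"
  by (intro symm_sum symm_scale)

lemma dsupp_comb:
  fixes b :: "'b \<Rightarrow> mono \<Rightarrow> 'a::comm_ring_1"
  shows "(\<And>lam. lam \<in> I \<Longrightarrow> dsupp r n (b lam)) \<Longrightarrow> dsupp r n (\<lambda>\<alpha>. \<Sum>lam\<in>I. c lam * b lam \<alpha>)"
  by (intro dsupp_sum dsupp_scale) auto

lemma symm_diff: "symm f \<Longrightarrow> symm g \<Longrightarrow> symm (\<lambda>\<alpha>. f \<alpha> - g \<alpha>)"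
  unfolding symm_def by simp

lemma dsupp_diff: "dsupp r n f \<Longrightarrow> dsupp r n g \<Longrightarrow> dsupp r n (\<lambda>\<alpha>. f \<alpha> - (g \<alpha> :: 'a::ab_group_add))"
  unfolding dsupp_def by (metis diff_zero diff_self)

lemma basis_gen:
  fixes b :: "(nat \<Rightarrow> nat list) \<Rightarrow> mono \<Rightarrow> ratfun"
  assumes mem: "\<And>lam. lam \<in> multipart r n \<Longrightarrow> b lam \<in> XiQt r n"
    and indep: "\<And>c. (\<forall>\<alpha>. (\<Sum>lam\<in>multipart r n. c lam * b lam \<alpha>) = 0) \<Longrightarrow> \<forall>lam\<in>multipart r n. c lam = 0"
  shows "is_Qt_basis r n b"
proof -
  let ?I = "multipart r n"
  obtain L where L: "distinct L" "set L = ?I" using finite_distinct_list[OF finite_multipart] by blast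
  let ?N = "length L"
  have bX: "\<And>lam. lam \<in> ?I \<Longrightarrow> (\<forall>\<alpha>. b lam \<alpha> \<in> Qt r) \<and> dsupp r n (b lam) \<and> symm (b lam)"
    using mem XiQt_D by blast
  have LI: "i < ?N \<Longrightarrow> L ! i \<in> ?I" for i using L(2) nth_mem by blast
  define M where "M = mat ?N ?N (\<lambda>(j, i). b (L ! i) (amono (L ! j)))"
  have Mc: "M \<in> carrier_mat ?N ?N" by (simp add: M_def)
  have Msum: "(\<Sum>i<?N. M $$ (j, i) * x i) = (\<Sum>lam\<in>?I. x (idx L lam) * b lam (amono (L ! j)))"
    if "j < ?N" for j x
  proof -
    have "(\<Sum>lam\<in>?I. x (idx L lam) * b lam (amono (L ! j))) = (\<Sum>i<?N. x (idx L (L ! i)) * b (L ! i) (amono (L ! j)))"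
      unfolding L(2)[symmetric] by (rule sum_list_idx[OF L(1)])
    also have "\<dots> = (\<Sum>i<?N. M $$ (j, i) * x i)" using that by (intro sum.cong refl) (simp add: M_def idx_nth[OF L(1)])
    finally show ?thesis by simp
  qed
  have detM: "det M \<noteq> 0"
  proof
    assume "det M = 0"
    then obtain x where x: "\<exists>k<?N. x k \<noteq> 0" "\<forall>j<?N. (\<Sum>k<?N. M $$ (j, k) * x k) = 0"
      using LA_dep[OF Mc] by blast
    define c where "c lam = x (idx L lam)" for lam
    define g where "g \<alpha> = (\<Sum>lam\<in>?I. c lam * b lam \<alpha>)" for \<alpha>
    have "g \<alpha> = 0" for \<alpha>
    proof (rule determ)
      show "symm g" unfolding g_def[abs_def] by (rule symm_comb) (use bX in blast)
      show "dsupp r n g" unfolding g_def[abs_def] by (rule dsupp_comb) (use bX in blast)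
      show "\<forall>\<mu>\<in>?I. g (amono \<mu>) = 0"
      proof
        fix \<mu> assume "\<mu> \<in> ?I"
        then obtain j where j: "j < ?N" "L ! j = \<mu>" using L by (metis in_set_conv_nth)
        show "g (amono \<mu>) = 0" using Msum[OF j(1), of x] x(2) j unfolding g_def c_def by simp
      qed
    qed
    then have "\<forall>lam\<in>?I. c lam = 0" using indep[of c] unfolding g_def by blast
    then have "x k = 0" if "k < ?N" for k using LI[OF that] idx_nth[OF L(1) that] unfolding c_def by metis
    then show False using x(1) by blast
  qed
  have span: "\<exists>c. (\<forall>lam\<in>?I. c lam \<in> Qt r) \<and> (\<forall>\<alpha>. f \<alpha> = (\<Sum>lam\<in>?I. c lam * b lam \<alpha>))"
    if f: "f \<in> XiQt r n" for f
  proof -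
    have fX: "(\<forall>\<alpha>. f \<alpha> \<in> Qt r) \<and> dsupp r n f \<and> symm f" using XiQt_D[OF f] .
    obtain x where x: "\<forall>k<?N. x k \<in> Qt r" "\<forall>j<?N. (\<Sum>k<?N. M $$ (j, k) * x k) = f (amono (L ! j))"
    proof -
      have "\<exists>x. (\<forall>k<?N. x k \<in> Qt r) \<and> (\<forall>j<?N. (\<Sum>k<?N. M $$ (j, k) * x k) = f (amono (L ! j)))"
      proof (rule LA_span[OF Mc detM])
        show "\<And>i j. i < ?N \<Longrightarrow> j < ?N \<Longrightarrow> M $$ (i, j) \<in> Qt r" using bX LI by (simp add: M_def)
        show "\<And>j. j < ?N \<Longrightarrow> f (amono (L ! j)) \<in> Qt r" using fX by blast
      qed
      then show ?thesis using that by blast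
    qed
    define c where "c lam = x (idx L lam)" for lam
    have cQ: "\<forall>lam\<in>?I. c lam \<in> Qt r" using x(1) idx_in[OF L(1)] L(2) unfolding c_def by auto
    define h where "h \<alpha> = f \<alpha> - (\<Sum>lam\<in>?I. c lam * b lam \<alpha>)" for \<alpha>
    have "h \<alpha> = 0" for \<alpha>
    proof (rule determ)
      show "symm h" unfolding h_def[abs_def] by (intro symm_diff symm_comb) (use bX fX in blast)+
      show "dsupp r n h" unfolding h_def[abs_def] by (intro dsupp_diff dsupp_comb) (use bX fX in blast)+
      show "\<forall>\<mu>\<in>?I. h (amono \<mu>) = 0"
      proof
        fix \<mu> assume "\<mu> \<in> ?I"
        then obtain j where j: "j < ?N" "L ! j = \<mu>" using L by (metis in_set_conv_nth)
        show "h (amono \<mu>) = 0" using Msum[OF j(1), of x] x(2) j unfolding h_def c_def by simp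
      qed
    qed
    then show ?thesis using cQ unfolding h_def by auto
  qed
  show ?thesis unfolding is_Qt_basis_def using mem indep span by blast
qed

lemma qg_emb: fixes TR :: "nat \<Rightarrow> R" shows "to_fract (qg r \<phi> TR lam \<alpha>) = qg r \<phi> (\<lambda>k. to_fract (TR k)) lam \<alpha>"
  using emb.hom_qg[of r \<phi> TR lam \<alpha>] by (simp add: comp_def)

lemma qg_psi: fixes TR :: "nat \<Rightarrow> R" shows "psi (qg r \<phi> TR lam \<alpha>) = qg r \<phi> (\<lambda>k. psi (TR k)) lam \<alpha>"
  using psi.hom_qg[of r \<phi> TR lam \<alpha>] by (simp add: comp_def)

lemma coeff_Eprod:
  assumes "lam \<in> multipart r n"
  shows "coeff (qg r \<phi> (\<lambda>_. XX) lam \<alpha>) n = prod_list (map (\<lambda>x. (-1::rat) ^ snd x) (rws r lam)) * Eprod r \<phi> lam \<alpha>"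
proof -
  have "coeff (qg r \<phi> (\<lambda>_. XX) lam \<alpha>) n = stop n (qg r \<phi> (\<lambda>_. XX) lam) \<alpha>" by (simp add: stop_def)
  also have "\<dots> = ser_prod (map (\<lambda>(k, s). (\<lambda>\<alpha>. (-1) ^ s * e_ser (\<phi> k) s \<alpha>)) (rws r lam)) \<alpha>"
    using qg_top(2)[OF assms] by simp
  also have "map (\<lambda>(k, s). (\<lambda>\<alpha>. (-1) ^ s * e_ser (\<phi> k) s \<alpha>)) (rws r lam)
      = map (\<lambda>x. (\<lambda>\<alpha>. (-1::rat) ^ snd x * e_ser (\<phi> (fst x)) (snd x) \<alpha>)) (rws r lam)"
    by (simp add: case_prod_unfold)
  also have "ser_prod \<dots> \<alpha> = prod_list (map (\<lambda>x. (-1::rat) ^ snd x) (rws r lam)) *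
      ser_prod (map (\<lambda>x. e_ser (\<phi> (fst x)) (snd x)) (rws r lam)) \<alpha>"
    by (rule ser_prod_scale)
  also have "map (\<lambda>x. e_ser (\<phi> (fst x)) (snd x)) (rws r lam) = map (\<lambda>(k, s). e_ser (\<phi> k) s) (rws r lam)"
    by (simp add: case_prod_unfold)
  finally show ?thesis unfolding Eprod_def .
qed

lemma sign_nz: "prod_list (map (\<lambda>x. (-1::rat) ^ snd x) xs) \<noteq> 0"
  by (induction xs) auto

lemma indep_qg:
  fixes TR :: "nat \<Rightarrow> R"
  assumes inj: "inj_on \<phi> {1..r}" and TR: "\<And>k. psi (TR k) = XX"
    and hc: "\<forall>\<alpha>. (\<Sum>lam\<in>multipart r n. c lam * qg r \<phi> (\<lambda>k. to_fract (TR k)) lam \<alpha>) = 0"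
  shows "\<forall>lam\<in>multipart r n. c lam = 0"
proof -
  let ?I = "multipart r n"
  obtain L where L: "distinct L" "set L = ?I" using finite_distinct_list[OF finite_multipart] by blast
  let ?N = "length L"
  have LI: "i < ?N \<Longrightarrow> L ! i \<in> ?I" for i using L(2) nth_mem by blast
  define P where "P = mat ?N ?N (\<lambda>(i, j). qg r \<phi> TR (L ! i) (gam r \<phi> (L ! j)))"
  have Pc: "P \<in> carrier_mat ?N ?N" by (simp add: P_def)
  define Mx where "Mx = mat ?N ?N (\<lambda>(i, j). qg r \<phi> (\<lambda>_. XX) (L ! i) (gam r \<phi> (L ! j)))"
  have Mxc: "Mx \<in> carrier_mat ?N ?N" by (simp add: Mx_def)
  have PMx: "map_mat psi P = Mx"
    by (rule eq_matI) (auto simp: P_def Mx_def qg_psi TR)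
  define Ec where "Ec = mat ?N ?N (\<lambda>(i, j). coeff (Mx $$ (i, j)) n)"
  have Ece: "Ec $$ (i, j) = prod_list (map (\<lambda>x. (-1::rat) ^ snd x) (rws r (L ! i))) * Eprod r \<phi> (L ! i) (gam r \<phi> (L ! j))"
    if "i < ?N" "j < ?N" for i j
    using that coeff_Eprod[OF LI[OF that(1)]] by (simp add: Ec_def Mx_def)
  have detE: "det Ec \<noteq> 0"
  proof (rule det_tri[where w="\<lambda>i. W (gam r \<phi> (L ! i))"])
    show "Ec \<in> carrier_mat ?N ?N" by (simp add: Ec_def)
    fix i j assume ij: "i < ?N" "j < ?N" "Ec $$ (i, j) \<noteq> 0"
    then have nz: "Eprod r \<phi> (L ! i) (gam r \<phi> (L ! j)) \<noteq> 0" using Ece by auto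
    show "W (gam r \<phi> (L ! j)) \<le> W (gam r \<phi> (L ! i))" by (rule E23(1)[OF nz])
    assume "W (gam r \<phi> (L ! j)) = W (gam r \<phi> (L ! i))"
    then have "L ! j = L ! i" using E23(2)[OF nz inj LI[OF ij(1)] LI[OF ij(2)]] by simp
    then show "j = i" using L(1) ij by (simp add: nth_eq_iff_index_eq)
  next
    fix i assume i: "i < ?N"
    have "Eprod r \<phi> (L ! i) (gam r \<phi> (L ! i)) \<noteq> 0" using E1[of r \<phi> "L ! i"] by simp
    then show "Ec $$ (i, i) \<noteq> 0" using Ece[OF i i] sign_nz by simp
  qed
  have "coeff (det Mx) (n * ?N) = det Ec" unfolding Ec_def
  proof (rule det_top[OF Mxc])
    fix i j assume ij: "i < ?N" "j < ?N"
    have "sdeg n (qg r \<phi> (\<lambda>_. XX) (L ! i))" by (rule qg_top(1)[OF LI[OF ij(1)]])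
    then show "degree (Mx $$ (i, j)) \<le> n" using ij by (simp add: Mx_def sdeg_def)
  qed
  then have "det Mx \<noteq> 0" using detE by auto
  then have "psi (det P) \<noteq> 0" using PMx psi.hom_det[of P] by simp
  then have dP: "det P \<noteq> 0" by auto
  define G where "G = map_mat to_fract P"
  have "det G = to_fract (det P)" unfolding G_def by (rule emb.hom_det)
  then have dG: "det G \<noteq> 0" using dP by simp
  have Gc: "transpose_mat G \<in> carrier_mat ?N ?N" using Pc by (simp add: G_def)
  have dGT: "det (transpose_mat G) \<noteq> 0" using dG det_transpose[of G ?N] Pc by (simp add: G_def)
  have s: "\<forall>j<?N. (\<Sum>k<?N. transpose_mat G $$ (j, k) * c (L ! k)) = 0"
  proof (intro allI impI)
    fix j assume j: "j < ?N"
    have "(\<Sum>k<?N. transpose_mat G $$ (j, k) * c (L ! k)) =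
        (\<Sum>k<?N. c (L ! k) * qg r \<phi> (\<lambda>k. to_fract (TR k)) (L ! k) (gam r \<phi> (L ! j)))"
      using j by (intro sum.cong refl) (simp add: G_def P_def qg_emb mult.commute)
    also have "\<dots> = (\<Sum>lam\<in>?I. c lam * qg r \<phi> (\<lambda>k. to_fract (TR k)) lam (gam r \<phi> (L ! j)))"
      unfolding L(2)[symmetric] by (rule sum_list_idx[OF L(1), symmetric])
    also have "\<dots> = 0" using hc by blast
    finally show "(\<Sum>k<?N. transpose_mat G $$ (j, k) * c (L ! k)) = 0" .
  qed
  have "\<forall>k<?N. c (L ! k) = 0" by (rule LA_indep[OF Gc dGT s])
  then show ?thesis using L by (metis in_set_conv_nth)
qed

lemma fam_inj:
  assumes r: "r > 0" shows "inj_on (\<lambda>k. fam r (int k + a)) {1..r}"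
proof (rule inj_onI)
  fix k k' assume k: "k \<in> {1..r}" "k' \<in> {1..r}" and e: "fam r (int k + a) = fam r (int k' + a)"
  have n1: "0 \<le> (int k + a - 1) mod int r" "0 \<le> (int k' + a - 1) mod int r" using r by auto
  have "(int k + a - 1) mod int r = (int k' + a - 1) mod int r"
    using e n1 unfolding fam_def by simp
  then have "int r dvd (int k + a - 1) - (int k' + a - 1)" by (simp add: mod_eq_dvd_iff)
  then have d: "int r dvd int k - int k'" by simp
  show "k = k'"
  proof (rule ccontr)
    assume "k \<noteq> k'"
    then have "int k - int k' \<noteq> 0" by simp
    then have "\<bar>int r\<bar> \<le> \<bar>int k - int k'\<bar>" using d by (rule dvd_imp_le_int)
    moreover have "\<bar>int k - int k'\<bar> < int r" using k by auto
    ultimately show False by simp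
  qed
qed

lemma tt_to_fract: "tt r k = to_fract (Xv (fam r k))"
  by (simp add: tt_def tvar_Xv)

theorem lemma2p6:
  fixes r n :: nat
  assumes "r \<ge> 2"
  shows "is_Qt_basis r n (qplus r) \<and> is_Qt_basis r n (qminus r)"
proof
  have r: "r > 0" using assms by simp
  have ep: "qplus r = qg r (\<lambda>k. fam r (int k - 1)) (\<lambda>k. to_fract (Xv (fam r (int k - 1))))"
    unfolding qplus_qg tt_to_fract ..
  have em: "qminus r = qg r (\<lambda>k. fam r (int k + 1)) (\<lambda>k. to_fract (Xv (fam r (int k))))"
    unfolding qminus_qg tt_to_fract ..
  have ip: "inj_on (\<lambda>k. fam r (int k - 1)) {1..r}" using fam_inj[OF r, of "-1"] by simp
  have im: "inj_on (\<lambda>k. fam r (int k + 1)) {1..r}" using fam_inj[OF r, of 1] by simp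
  show "is_Qt_basis r n (qplus r)"
  proof (rule basis_gen)
    show "\<And>lam. lam \<in> multipart r n \<Longrightarrow> qplus r lam \<in> XiQt r n" using qplus_XiQt[OF assms] by blast
    fix c assume "\<forall>\<alpha>. (\<Sum>lam\<in>multipart r n. c lam * qplus r lam \<alpha>) = 0"
    then show "\<forall>lam\<in>multipart r n. c lam = 0" unfolding ep
      by (intro indep_qg[OF ip]) (simp_all add: psi_Xv)
  qed
  show "is_Qt_basis r n (qminus r)"
  proof (rule basis_gen)
    show "\<And>lam. lam \<in> multipart r n \<Longrightarrow> qminus r lam \<in> XiQt r n" using qminus_XiQt[OF assms] by blast
    fix c assume "\<forall>\<alpha>. (\<Sum>lam\<in>multipart r n. c lam * qminus r lam \<alpha>) = 0"
    then show "\<forall>lam\<in>multipart r n. c lam = 0" unfolding em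
      by (intro indep_qg[OF im]) (simp_all add: psi_Xv)
  qed
qed

end
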